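(* (a) $\mathbf T_{m+1}$ is a Poisson submanifold of $\mathfrak g$ equipped with the bracket ${\rm PB}_1({\rm R};\mathcal F)$. (b) Let $\varphi$ be an Ad-invariant function on $\mathfrak g$ and $\psi(T)=\varphi(T\mathcal F^{-1})=\varphi(\mathcal F^{-1}T)$. The Hamiltonian equation of $\psi$ with respect to ${\rm PB}_1({\rm R};\mathcal F)$ reads $\dot T=T\mathcal C_2-\mathcal C_1T$ with $\mathcal C_1=\frac12\mathcal F\,{\rm R}\big(\mathcal F^{-1}\nabla\varphi(T\mathcal F^{-1})\big)$, $\mathcal C_2=\frac12{\rm R}\big(\nabla\varphi(\mathcal F^{-1}T)\mathcal F^{-1}\big)\mathcal F$; it restricts to $\mathbf T_{m+1}$, and the matrices $\mathcal T_1=I+\alpha T\mathcal F^{-1}$, $\mathcal T_2=I+\alpha\mathcal F^{-1}T$ evolve by $\dot{\mathcal T}_i=[\mathcal T_i,\mathcal C_i]$, $i=1,2$. (c) For Ad-invariant $\varphi_1,\varphi_2$ on $\mathfrak g$, the functions $\psi_i(T)=\varphi_i(T\mathcal F^{-1})$ are in involution with respect to ${\rm PB}_1({\rm R};\mathcal F)$.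
   Context: Periodic lattice setting. Integers $N\ge2$, $m\ge1$; $\mathfrak g=\{X(\lambda)\in gl(N)[\lambda,\lambda^{-1}]:\Omega X(\lambda)\Omega^{-1}=X(\omega\lambda)\}$ with $\omega=e^{2\pi i/N}$, $\Omega=\mathrm{diag}(1,\omega,\dots,\omega^{N-1})$, matrix indices modulo $N$; $\langle X,Y\rangle$ = coefficient of $\lambda^0$ in $\mathrm{tr}(XY)$. $\mathfrak g_p$ = elements $\lambda^p\sum_{j-k\equiv p}x_{jk}E_{jk}$; $\pi_+,\pi_-$ projections onto $\oplus_{p\ge0}\mathfrak g_p$, $\oplus_{p<0}\mathfrak g_p$; ${\rm R}=\pi_+-\pi_-$. Gradient: $\langle\nabla\varphi(L),M\rangle=\frac{d}{d\varepsilon}\varphi(L+\varepsilon M)|_{\varepsilon=0}$; $\varphi$ Ad-invariant means $[\nabla\varphi(L),L]=0$ for all $L$. $\alpha$ real; $\mathcal E=\lambda\sum_kE_{k+1,k}$, $\mathcal F=I-\alpha\mathcal E$, $\mathcal F^{-1}$ understood as a formal power series in $\lambda$. $[X,Y]^{(\mathcal F)}=X\mathcal FY-Y\mathcal FX$; ${\rm PB}_1({\rm R};\mathcal F)$: $\{\varphi,\psi\}_1(L)=\frac12\langle[{\rm R}\nabla\varphi,\nabla\psi]^{(\mathcal F)}+[\nabla\varphi,{\rm R}\nabla\psi]^{(\mathcal F)},L\rangle$. $\mathbf T_{m+1}$ = set of $T=\mathcal E+\sum_kb_kE_{kk}+\sum_{j=1}^m\lambda^{-j}\sum_ka_k^{(j)}E_{k,k+j}$.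 Hamiltonian flow of $H$: $\frac{d}{dt}f=\{H,f\}$. *)

theory Defs
  imports "HOL-Analysis.Analysis"
begin

text \<open>
  An element
  X(lambda) = sum_p lambda^p X_p is encoded as the function  X p j k  = (j,k) entry of the
  coefficient X_p of lambda^p.  Matrix indices run over 0..N-1 (i.e. modulo N).
\<close>

type_synonym lser = "int \<Rightarrow> nat \<Rightarrow> nat \<Rightarrow> complex"

text \<open>The algebra: entries vanish outside 0..N-1, twisting condition
  (Omega X(lambda) Omega^-1 = X(omega lambda), i.e. X_p is supported on j - k = p mod N),
  and only finitely many negative powers of lambda (so that the formal power series
  F^-1 in lambda makes sense).\<close>

definition ghat :: "nat \<Rightarrow> lser set" where
  "ghat N = {X. (\<forall>p j k. (N \<le> j \<or> N \<le> k) \<longrightarrow> X p j k = 0)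
              \<and> (\<forall>p j k. X p j k \<noteq> 0 \<longrightarrow> (int j - int k) mod int N = p mod int N)
              \<and> (\<exists>d. \<forall>p j k. p < d \<longrightarrow> X p j k = 0)}"

definition ladd :: "lser \<Rightarrow> lser \<Rightarrow> lser" where
  "ladd X Y = (\<lambda>p j k. X p j k + Y p j k)"

definition lsub :: "lser \<Rightarrow> lser \<Rightarrow> lser" where
  "lsub X Y = (\<lambda>p j k. X p j k - Y p j k)"

definition lscale :: "complex \<Rightarrow> lser \<Rightarrow> lser" where
  "lscale c X = (\<lambda>p j k. c * X p j k)"

text \<open>Product of Laurent series (the sum over q is finite for series bounded below).\<close>
definition lmul :: "nat \<Rightarrow> lser \<Rightarrow> lser \<Rightarrow> lser" where
  "lmul N X Y = (\<lambda>p j k. \<Sum>q\<in>{q. X q \<noteq> (\<lambda>a b. 0) \<and> Y (p - q) \<noteq> (\<lambda>a b. 0)}.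
                      \<Sum>l<N. X q j l * Y (p - q) l k)"

text \<open>The pairing  <X,Y> = coefficient of lambda^0 in tr(XY).\<close>
definition pair :: "nat \<Rightarrow> lser \<Rightarrow> lser \<Rightarrow> complex" where
  "pair N X Y = (\<Sum>q\<in>{q. X q \<noteq> (\<lambda>a b. 0) \<and> Y (- q) \<noteq> (\<lambda>a b. 0)}.
                   \<Sum>j<N. \<Sum>l<N. X q j l * Y (- q) l j)"

definition lid :: "nat \<Rightarrow> lser" where
  "lid N = (\<lambda>p j k. if p = 0 \<and> j = k \<and> j < N then 1 else 0)"

fun lpow :: "nat \<Rightarrow> lser \<Rightarrow> nat \<Rightarrow> lser" where
  "lpow N X 0 = lid N"
| "lpow N X (Suc n) = lmul N X (lpow N X n)"

definition calE :: "nat \<Rightarrow> lser" where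
  "calE N = (\<lambda>p j k. if p = 1 \<and> j < N \<and> k < N \<and> j = (k + 1) mod N then 1 else 0)"

definition calF :: "nat \<Rightarrow> real \<Rightarrow> lser" where
  "calF N \<alpha> = lsub (lid N) (lscale (complex_of_real \<alpha>) (calE N))"

text \<open>calF^-1 as the formal power series  sum_{n>=0} alpha^n calE^n  in lambda
  (calE^n is homogeneous of degree n, so the coefficient of lambda^p is that of alpha^p calE^p).\<close>
definition calFinv :: "nat \<Rightarrow> real \<Rightarrow> lser" where
  "calFinv N \<alpha> = (\<lambda>p j k. if p < 0 then 0
                     else complex_of_real \<alpha> ^ nat p * lpow N (calE N) (nat p) p j k)"

definition pi_plus :: "lser \<Rightarrow> lser" where
  "pi_plus X = (\<lambda>p j k. if 0 \<le> p then X p j k else 0)"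

definition pi_minus :: "lser \<Rightarrow> lser" where
  "pi_minus X = (\<lambda>p j k. if p < 0 then X p j k else 0)"

definition Rop :: "lser \<Rightarrow> lser" where
  "Rop X = lsub (pi_plus X) (pi_minus X)"

definition brF :: "nat \<Rightarrow> real \<Rightarrow> lser \<Rightarrow> lser \<Rightarrow> lser" where
  "brF N \<alpha> X Y = lsub (lmul N X (lmul N (calF N \<alpha>) Y)) (lmul N Y (lmul N (calF N \<alpha>) X))"

definition has_grad :: "nat \<Rightarrow> (lser \<Rightarrow> complex) \<Rightarrow> lser \<Rightarrow> lser \<Rightarrow> bool" where
  "has_grad N \<phi> L G \<longleftrightarrow> G \<in> ghat N \<and>
     (\<forall>M\<in>ghat N. ((\<lambda>\<epsilon>. \<phi> (ladd L (lscale \<epsilon> M))) has_field_derivative pair N G M) (at 0))"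

definition grad :: "nat \<Rightarrow> (lser \<Rightarrow> complex) \<Rightarrow> lser \<Rightarrow> lser" where
  "grad N \<phi> L = (THE G. has_grad N \<phi> L G)"

definition adm_curve :: "nat \<Rightarrow> (complex \<Rightarrow> lser) \<Rightarrow> bool" where
  "adm_curve N \<gamma> \<longleftrightarrow> (\<forall>s. \<gamma> s \<in> ghat N)
     \<and> (\<exists>d. \<forall>s p j k. p < d \<longrightarrow> \<gamma> s p j k = 0)
     \<and> (\<forall>p j k s. (\<lambda>t. \<gamma> t p j k) field_differentiable (at s))"

definition cderiv :: "(complex \<Rightarrow> lser) \<Rightarrow> complex \<Rightarrow> lser" where
  "cderiv \<gamma> s = (\<lambda>p j k. deriv (\<lambda>t. \<gamma> t p j k) s)"

text \<open>Smooth functions on the algebra: the gradient exists at every point and the chain rule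
  holds along smooth curves (smoothness in the sense of convenient calculus).\<close>
definition smooth_fn :: "nat \<Rightarrow> (lser \<Rightarrow> complex) \<Rightarrow> bool" where
  "smooth_fn N \<phi> \<longleftrightarrow> (\<forall>L\<in>ghat N. \<exists>G. has_grad N \<phi> L G)
     \<and> (\<forall>\<gamma>. adm_curve N \<gamma> \<longrightarrow> (\<forall>s. ((\<lambda>t. \<phi> (\<gamma> t)) has_field_derivative
            pair N (grad N \<phi> (\<gamma> s)) (cderiv \<gamma> s)) (at s)))"

definition ad_inv :: "nat \<Rightarrow> (lser \<Rightarrow> complex) \<Rightarrow> bool" where
  "ad_inv N \<phi> \<longleftrightarrow> smooth_fn N \<phi> \<and>
     (\<forall>L\<in>ghat N. lmul N (grad N \<phi> L) L = lmul N L (grad N \<phi> L))"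

definition PB1 :: "nat \<Rightarrow> real \<Rightarrow> (lser \<Rightarrow> complex) \<Rightarrow> (lser \<Rightarrow> complex) \<Rightarrow> lser \<Rightarrow> complex" where
  "PB1 N \<alpha> \<phi> \<psi> L = (1/2) * pair N
      (ladd (brF N \<alpha> (Rop (grad N \<phi> L)) (grad N \<psi> L))
            (brF N \<alpha> (grad N \<phi> L) (Rop (grad N \<psi> L)))) L"

text \<open>V is the Hamiltonian vector field of H at L:  d/dt f = {H, f}  means
  <grad f(L), V> = {H,f}(L) for every smooth f.\<close>
definition ham_vf :: "nat \<Rightarrow> real \<Rightarrow> (lser \<Rightarrow> complex) \<Rightarrow> lser \<Rightarrow> lser \<Rightarrow> bool" where
  "ham_vf N \<alpha> H L V \<longleftrightarrow> V \<in> ghat N \<and>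
     (\<forall>f. smooth_fn N f \<longrightarrow> PB1 N \<alpha> H f L = pair N (grad N f L) V)"

text \<open>Variable part of an element of T_{m+1}:
  sum_k b_k E_kk + sum_{i=1}^m lambda^-i sum_k a^(i)_k E_{k,k+i}; these form the tangent space.\<close>
definition Tvar :: "nat \<Rightarrow> nat \<Rightarrow> (nat \<Rightarrow> complex) \<Rightarrow> (nat \<Rightarrow> nat \<Rightarrow> complex) \<Rightarrow> lser" where
  "Tvar N m b a = (\<lambda>p j k.
      (if p = 0 \<and> j = k \<and> j < N then b j else 0)
    + (if - int m \<le> p \<and> p \<le> -1 \<and> j < N \<and> k < N \<and> k = (j + nat (- p)) mod N
         then a (nat (- p)) j else 0))"

definition Tdir :: "nat \<Rightarrow> nat \<Rightarrow> lser set" where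
  "Tdir N m = {Tvar N m b a | b a. True}"

definition Tset :: "nat \<Rightarrow> nat \<Rightarrow> lser set" where
  "Tset N m = {ladd (calE N) (Tvar N m b a) | b a. True}"

text \<open>Poisson submanifold (of an affine subspace S = base + D): at every point of S
  every Hamiltonian vector field is tangent to S, i.e. lies in D.\<close>
definition poisson_submanifold ::
  "nat \<Rightarrow> real \<Rightarrow> lser set \<Rightarrow> lser set \<Rightarrow> bool" where
  "poisson_submanifold N \<alpha> S D \<longleftrightarrow>
     (\<forall>H. smooth_fn N H \<longrightarrow> (\<forall>L\<in>S. \<exists>V\<in>D. ham_vf N \<alpha> H L V))"

end

theory Submission
  imports Defs "HOL-Computational_Algebra.Formal_Power_Series"
begin


definition lbd :: "lser \<Rightarrow> int \<Rightarrow> bool" where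
  "lbd X d \<longleftrightarrow> (\<forall>p j k. p < d \<longrightarrow> X p j k = 0)"
definition ubd :: "lser \<Rightarrow> int \<Rightarrow> bool" where
  "ubd X d \<longleftrightarrow> (\<forall>p j k. d < p \<longrightarrow> X p j k = 0)"

lemma lbdD: "lbd X d \<Longrightarrow> p < d \<Longrightarrow> X p = (\<lambda>a b. 0)"
  by (auto simp: lbd_def intro!: ext)
lemma ubdD: "ubd X d \<Longrightarrow> d < p \<Longrightarrow> X p = (\<lambda>a b. 0)"
  by (auto simp: ubd_def intro!: ext)

lemma lmul_eq_sum:
  assumes "finite Q" and "\<And>q. q \<notin> Q \<Longrightarrow> X q = (\<lambda>a b. 0) \<or> Y (p - q) = (\<lambda>a b. 0)"
  shows "lmul N X Y p j k = (\<Sum>q\<in>Q. \<Sum>l<N. X q j l * Y (p - q) l k)"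
proof -
  let ?S = "{q. X q \<noteq> (\<lambda>a b. 0) \<and> Y (p - q) \<noteq> (\<lambda>a b. 0)}"
  have sub: "?S \<subseteq> Q"
  proof
    fix q assume "q \<in> ?S" then show "q \<in> Q" using assms(2)[of q] by auto
  qed
  have "(\<Sum>q\<in>?S. \<Sum>l<N. X q j l * Y (p - q) l k) = (\<Sum>q\<in>Q. \<Sum>l<N. X q j l * Y (p - q) l k)"
  proof (rule sum.mono_neutral_left[OF assms(1) sub])
    show "\<forall>i\<in>Q - ?S. (\<Sum>l<N. X i j l * Y (p - i) l k) = 0"
    proof
      fix i assume "i \<in> Q - ?S"
      then have "X i = (\<lambda>a b. 0) \<or> Y (p - i) = (\<lambda>a b. 0)" by simp
      then show "(\<Sum>l<N. X i j l * Y (p - i) l k) = 0" by auto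
    qed
  qed
  then show ?thesis unfolding lmul_def by simp
qed

lemma pair_eq_sum:
  assumes "finite Q" and "\<And>q. q \<notin> Q \<Longrightarrow> X q = (\<lambda>a b. 0) \<or> Y (- q) = (\<lambda>a b. 0)"
  shows "pair N X Y = (\<Sum>q\<in>Q. \<Sum>j<N. \<Sum>l<N. X q j l * Y (- q) l j)"
proof -
  let ?S = "{q. X q \<noteq> (\<lambda>a b. 0) \<and> Y (- q) \<noteq> (\<lambda>a b. 0)}"
  have sub: "?S \<subseteq> Q"
  proof
    fix q assume "q \<in> ?S" then show "q \<in> Q" using assms(2)[of q] by auto
  qed
  have "(\<Sum>q\<in>?S. \<Sum>j<N. \<Sum>l<N. X q j l * Y (- q) l j) = (\<Sum>q\<in>Q. \<Sum>j<N. \<Sum>l<N. X q j l * Y (- q) l j)"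
  proof (rule sum.mono_neutral_left[OF assms(1) sub])
    show "\<forall>i\<in>Q - ?S. (\<Sum>j<N. \<Sum>l<N. X i j l * Y (- i) l j) = 0"
    proof
      fix i assume "i \<in> Q - ?S"
      then have "X i = (\<lambda>a b. 0) \<or> Y (- i) = (\<lambda>a b. 0)" by simp
      then show "(\<Sum>j<N. \<Sum>l<N. X i j l * Y (- i) l j) = 0" by auto
    qed
  qed
  then show ?thesis unfolding pair_def by simp
qed

lemma lmul_win:
  assumes "lbd X a" "lbd Y b" "finite Q" "{a..p-b} \<subseteq> Q"
  shows "lmul N X Y p j k = (\<Sum>q\<in>Q. \<Sum>l<N. X q j l * Y (p - q) l k)"
proof (rule lmul_eq_sum[OF assms(3)])
  fix q assume "q \<notin> Q"
  then have q: "q \<notin> {a..p-b}" using assms(4) by auto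
  show "X q = (\<lambda>a b. 0) \<or> Y (p - q) = (\<lambda>a b. 0)"
  proof (cases "q < a")
    case True then show ?thesis using lbdD[OF assms(1) True] by simp
  next
    case False then have "p - q < b" using q by simp
    then show ?thesis using lbdD[OF assms(2)] by simp
  qed
qed

lemma pair_win:
  assumes "lbd X a" "lbd Y b" "finite Q" "{a..-b} \<subseteq> Q"
  shows "pair N X Y = (\<Sum>q\<in>Q. \<Sum>j<N. \<Sum>l<N. X q j l * Y (- q) l j)"
proof (rule pair_eq_sum[OF assms(3)])
  fix q assume "q \<notin> Q"
  then have q: "q \<notin> {a..-b}" using assms(4) by auto
  show "X q = (\<lambda>a b. 0) \<or> Y (- q) = (\<lambda>a b. 0)"
  proof (cases "q < a")
    case True then show ?thesis using lbdD[OF assms(1) True] by simp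
  next
    case False then have "- q < b" using q by simp
    then show ?thesis using lbdD[OF assms(2)] by simp
  qed
qed

lemma lmul_shift:
  assumes "finite Q" and "\<And>q. q \<notin> Q \<Longrightarrow> X (q - r) = (\<lambda>a b. 0) \<or> Y (p + r - q) = (\<lambda>a b. 0)"
  shows "lmul N X Y p j k = (\<Sum>q\<in>Q. \<Sum>l<N. X (q - r) j l * Y (p + r - q) l k)"
proof -
  have "lmul N X Y p j k = (\<Sum>q\<in>(\<lambda>q. q - r) ` Q. \<Sum>l<N. X q j l * Y (p - q) l k)"
  proof (rule lmul_eq_sum)
    show "finite ((\<lambda>q. q - r) ` Q)" using assms(1) by simp
    fix q assume "q \<notin> (\<lambda>q. q - r) ` Q"
    then have "q + r \<notin> Q" by force
    from assms(2)[OF this] show "X q = (\<lambda>a b. 0) \<or> Y (p - q) = (\<lambda>a b. 0)" by (simp add: algebra_simps)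
  qed
  also have "\<dots> = (\<Sum>q\<in>Q. \<Sum>l<N. X (q - r) j l * Y (p + r - q) l k)"
    by (subst sum.reindex) (auto simp: inj_on_def algebra_simps)
  finally show ?thesis .
qed

lemma lbd_mono: "lbd X a \<Longrightarrow> b \<le> a \<Longrightarrow> lbd X b" by (auto simp: lbd_def)
lemma ubd_mono: "ubd X a \<Longrightarrow> a \<le> b \<Longrightarrow> ubd X b" by (auto simp: ubd_def)

lemma lbd_lmul: "lbd X a \<Longrightarrow> lbd Y b \<Longrightarrow> lbd (lmul N X Y) (a + b)"
  unfolding lbd_def[of "lmul N X Y"]
proof (intro allI impI)
  fix p j k assume X: "lbd X a" and Y: "lbd Y b" and p: "p < a + b"
  have "lmul N X Y p j k = (\<Sum>q\<in>{}. \<Sum>l<N. X q j l * Y (p - q) l k)"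
    by (rule lmul_win[OF X Y]) (use p in auto)
  then show "lmul N X Y p j k = 0" by simp
qed

lemma ubd_lmul: "ubd X a \<Longrightarrow> ubd Y b \<Longrightarrow> ubd (lmul N X Y) (a + b)"
  unfolding ubd_def[of "lmul N X Y"]
proof (intro allI impI)
  fix p j k assume X: "ubd X a" and Y: "ubd Y b" and p: "a + b < p"
  have "lmul N X Y p j k = (\<Sum>q\<in>{}. \<Sum>l<N. X q j l * Y (p - q) l k)"
  proof (rule lmul_eq_sum)
    fix q
    have "a < q \<or> b < p - q" using p by auto
    then show "X q = (\<lambda>a b. 0) \<or> Y (p - q) = (\<lambda>a b. 0)" using ubdD[OF X] ubdD[OF Y] by auto
  qed auto
  then show "lmul N X Y p j k = 0" by simp
qed

lemma lmul_assoc: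
  assumes X: "lbd X a" and Y: "lbd Y b" and Z: "lbd Z c"
  shows "lmul N (lmul N X Y) Z = lmul N X (lmul N Y Z)"
proof (intro ext)
  fix p j k
  define Iq where "Iq = {a+b..p-c}"
  define Ir where "Ir = {a..p-b-c}"
  have "lmul N (lmul N X Y) Z p j k = (\<Sum>q\<in>Iq. \<Sum>l<N. lmul N X Y q j l * Z (p - q) l k)"
    by (rule lmul_win[OF lbd_lmul[OF X Y] Z]) (auto simp: Iq_def)
  also have "\<dots> = (\<Sum>q\<in>Iq. \<Sum>l<N. (\<Sum>r\<in>Ir. \<Sum>l'<N. X r j l' * Y (q - r) l' l) * Z (p - q) l k)"
  proof (intro sum.cong refl)
    fix q l assume "q \<in> Iq"
    then show "lmul N X Y q j l * Z (p - q) l k = (\<Sum>r\<in>Ir. \<Sum>l'<N. X r j l' * Y (q - r) l' l) * Z (p - q) l k"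
      by (subst lmul_win[OF X Y, where Q=Ir]) (auto simp: Iq_def Ir_def)
  qed
  also have "\<dots> = (\<Sum>q\<in>Iq. \<Sum>l<N. \<Sum>r\<in>Ir. \<Sum>l'<N. X r j l' * Y (q - r) l' l * Z (p - q) l k)"
    by (simp add: sum_distrib_right)
  also have "\<dots> = (\<Sum>r\<in>Ir. \<Sum>l'<N. \<Sum>q\<in>Iq. \<Sum>l<N. X r j l' * Y (q - r) l' l * Z (p - q) l k)"
  proof -
    define f where "f = (\<lambda>q l r l'. X r j l' * Y (q - r) l' l * Z (p - q) l k)"
    have "(\<Sum>q\<in>Iq. \<Sum>l<N. \<Sum>r\<in>Ir. \<Sum>l'<N. f q l r l') = (\<Sum>q\<in>Iq. \<Sum>r\<in>Ir. \<Sum>l<N. \<Sum>l'<N. f q l r l')"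
      by (rule sum.cong[OF refl], rule sum.swap)
    also have "\<dots> = (\<Sum>q\<in>Iq. \<Sum>r\<in>Ir. \<Sum>l'<N. \<Sum>l<N. f q l r l')"
      by (rule sum.cong[OF refl], rule sum.cong[OF refl], rule sum.swap)
    also have "\<dots> = (\<Sum>r\<in>Ir. \<Sum>q\<in>Iq. \<Sum>l'<N. \<Sum>l<N. f q l r l')"
      by (rule sum.swap)
    also have "\<dots> = (\<Sum>r\<in>Ir. \<Sum>l'<N. \<Sum>q\<in>Iq. \<Sum>l<N. f q l r l')"
      by (rule sum.cong[OF refl], rule sum.swap)
    finally show ?thesis unfolding f_def .
  qed
  also have "\<dots> = (\<Sum>r\<in>Ir. \<Sum>l'<N. X r j l' * lmul N Y Z (p - r) l' k)"
  proof (intro sum.cong refl)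
    fix r l' assume r: "r \<in> Ir"
    have "lmul N Y Z (p - r) l' k = (\<Sum>q\<in>Iq. \<Sum>l<N. Y (q - r) l' l * Z (p - r + r - q) l k)"
    proof (rule lmul_shift)
      fix q assume "q \<notin> Iq"
      then have "q - r < b \<or> p - r + r - q < c" using r by (auto simp: Iq_def Ir_def)
      then show "Y (q - r) = (\<lambda>a b. 0) \<or> Z (p - r + r - q) = (\<lambda>a b. 0)" using lbdD[OF Y] lbdD[OF Z] by auto
    qed (simp add: Iq_def)
    then show "(\<Sum>q\<in>Iq. \<Sum>l<N. X r j l' * Y (q - r) l' l * Z (p - q) l k) = X r j l' * lmul N Y Z (p - r) l' k"
      by (simp add: sum_distrib_left mult.assoc)
  qed
  also have "\<dots> = lmul N X (lmul N Y Z) p j k"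
    by (rule lmul_win[OF X lbd_lmul[OF Y Z], symmetric]) (auto simp: Ir_def)
  finally show "lmul N (lmul N X Y) Z p j k = lmul N X (lmul N Y Z) p j k" .
qed



definition lb :: "lser \<Rightarrow> bool" where "lb X \<longleftrightarrow> (\<exists>d. lbd X d)"

lemma ladd_apply[simp]: "ladd X Y p j k = X p j k + Y p j k" by (simp add: ladd_def)
lemma lsub_apply[simp]: "lsub X Y p j k = X p j k - Y p j k" by (simp add: lsub_def)
lemma lscale_apply[simp]: "lscale c X p j k = c * X p j k" by (simp add: lscale_def)
lemma pi_plus_apply[simp]: "pi_plus X p j k = (if 0 \<le> p then X p j k else 0)" by (simp add: pi_plus_def)
lemma pi_minus_apply[simp]: "pi_minus X p j k = (if p < 0 then X p j k else 0)" by (simp add: pi_minus_def)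
lemma Rop_apply[simp]: "Rop X p j k = (if 0 \<le> p then X p j k else - X p j k)" by (simp add: Rop_def)

lemma lb_lmul[simp]: "lb X \<Longrightarrow> lb Y \<Longrightarrow> lb (lmul N X Y)"
  unfolding lb_def using lbd_lmul by blast
lemma lb_ladd[simp]: "lb X \<Longrightarrow> lb Y \<Longrightarrow> lb (ladd X Y)"
  unfolding lb_def lbd_def by (metis (no_types, opaque_lifting) add.right_neutral ladd_apply min.strict_boundedE)
lemma lb_lsub[simp]: "lb X \<Longrightarrow> lb Y \<Longrightarrow> lb (lsub X Y)"
  unfolding lb_def lbd_def by (metis (no_types, opaque_lifting) diff_zero lsub_apply min.strict_boundedE)
lemma lb_lscale[simp]: "lb X \<Longrightarrow> lb (lscale c X)"
  unfolding lb_def lbd_def by auto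
lemma lb_Rop[simp]: "lb X \<Longrightarrow> lb (Rop X)"
  unfolding lb_def lbd_def by auto
lemma lb_pi_plus[simp]: "lb X \<Longrightarrow> lb (pi_plus X)"
  unfolding lb_def lbd_def by auto
lemma lb_pi_minus[simp]: "lb X \<Longrightarrow> lb (pi_minus X)"
  unfolding lb_def lbd_def by auto
lemma lb_lid[simp]: "lb (lid N)"
  unfolding lb_def lbd_def lid_def by (rule exI[of _ 0]) auto
lemma lb_zero[simp]: "lb (\<lambda>p j k. 0)"
  unfolding lb_def lbd_def by auto

lemma lbE: assumes "lb X" obtains d where "lbd X d" using assms unfolding lb_def by blast

lemma lb2E: assumes "lb X" "lb Y" obtains d where "lbd X d" "lbd Y d"
proof -
  obtain a where "lbd X a" using assms(1) by (rule lbE)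
  moreover obtain b where "lbd Y b" using assms(2) by (rule lbE)
  ultimately
  show ?thesis using that[of "min a b"] by (meson lbd_mono min.cobounded1 min.cobounded2)
qed

lemma lb3E: assumes "lb X" "lb Y" "lb Z" obtains d where "lbd X d" "lbd Y d" "lbd Z d"
proof -
  obtain a b where "lbd X a" "lbd Y a" "lbd Z b" using assms by (metis lb2E lbE)
  then show ?thesis using that[of "min a b"] by (meson lbd_mono min.cobounded1 min.cobounded2)
qed

lemma lmul_assoc_lb: "lb X \<Longrightarrow> lb Y \<Longrightarrow> lb Z \<Longrightarrow> lmul N (lmul N X Y) Z = lmul N X (lmul N Y Z)"
  by (metis lb3E lmul_assoc)

lemma lmul_win2:
  assumes "lbd X d" "lbd Y d"
  shows "lmul N X Y p j k = (\<Sum>q\<in>{d..p-d}. \<Sum>l<N. X q j l * Y (p - q) l k)"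
  by (rule lmul_win[OF assms]) auto

lemma lmul_ladd_right: assumes "lb X" "lb Y" "lb Z"
  shows "lmul N X (ladd Y Z) = ladd (lmul N X Y) (lmul N X Z)"
proof (intro ext)
  fix p j k
  obtain d where d: "lbd X d" "lbd Y d" "lbd Z d" using assms by (rule lb3E)
  have dd: "lbd (ladd Y Z) d" using d unfolding lbd_def by simp
  show "lmul N X (ladd Y Z) p j k = ladd (lmul N X Y) (lmul N X Z) p j k"
    by (simp add: lmul_win2[OF d(1) dd] lmul_win2[OF d(1) d(2)] lmul_win2[OF d(1) d(3)]
        sum.distrib distrib_left)
qed

lemma lmul_ladd_left: assumes "lb X" "lb Y" "lb Z"
  shows "lmul N (ladd X Y) Z = ladd (lmul N X Z) (lmul N Y Z)"
proof (intro ext)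
  fix p j k
  obtain d where d: "lbd X d" "lbd Y d" "lbd Z d" using assms by (rule lb3E)
  have dd: "lbd (ladd X Y) d" using d unfolding lbd_def by simp
  show "lmul N (ladd X Y) Z p j k = ladd (lmul N X Z) (lmul N Y Z) p j k"
    by (simp add: lmul_win2[OF dd d(3)] lmul_win2[OF d(1) d(3)] lmul_win2[OF d(2) d(3)]
        sum.distrib distrib_right)
qed

lemma lmul_lsub_right: assumes "lb X" "lb Y" "lb Z"
  shows "lmul N X (lsub Y Z) = lsub (lmul N X Y) (lmul N X Z)"
proof (intro ext)
  fix p j k
  obtain d where d: "lbd X d" "lbd Y d" "lbd Z d" using assms by (rule lb3E)
  have dd: "lbd (lsub Y Z) d" using d unfolding lbd_def by simp
  show "lmul N X (lsub Y Z) p j k = lsub (lmul N X Y) (lmul N X Z) p j k"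
    by (simp add: lmul_win2[OF d(1) dd] lmul_win2[OF d(1) d(2)] lmul_win2[OF d(1) d(3)]
        sum_subtractf right_diff_distrib)
qed

lemma lmul_lsub_left: assumes "lb X" "lb Y" "lb Z"
  shows "lmul N (lsub X Y) Z = lsub (lmul N X Z) (lmul N Y Z)"
proof (intro ext)
  fix p j k
  obtain d where d: "lbd X d" "lbd Y d" "lbd Z d" using assms by (rule lb3E)
  have dd: "lbd (lsub X Y) d" using d unfolding lbd_def by simp
  show "lmul N (lsub X Y) Z p j k = lsub (lmul N X Z) (lmul N Y Z) p j k"
    by (simp add: lmul_win2[OF dd d(3)] lmul_win2[OF d(1) d(3)] lmul_win2[OF d(2) d(3)]
        sum_subtractf left_diff_distrib)
qed

lemma lmul_lscale_right: assumes "lb X" "lb Y"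
  shows "lmul N X (lscale c Y) = lscale c (lmul N X Y)"
proof (intro ext)
  fix p j k
  obtain d where d: "lbd X d" "lbd Y d" using assms by (rule lb2E)
  have dd: "lbd (lscale c Y) d" using d unfolding lbd_def by simp
  show "lmul N X (lscale c Y) p j k = lscale c (lmul N X Y) p j k"
    by (simp add: lmul_win2[OF d(1) dd] lmul_win2[OF d(1) d(2)] sum_distrib_left algebra_simps)
qed

lemma lmul_lscale_left: assumes "lb X" "lb Y"
  shows "lmul N (lscale c X) Y = lscale c (lmul N X Y)"
proof (intro ext)
  fix p j k
  obtain d where d: "lbd X d" "lbd Y d" using assms by (rule lb2E)
  have dd: "lbd (lscale c X) d" using d unfolding lbd_def by simp
  show "lmul N (lscale c X) Y p j k = lscale c (lmul N X Y) p j k"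
    by (simp add: lmul_win2[OF dd d(2)] lmul_win2[OF d(1) d(2)] sum_distrib_left algebra_simps)
qed

lemma sum_delta_l: "(\<Sum>l<(N::nat). (if j = l then 1 else 0) * (f l::complex)) = (if j < N then f j else 0)"
proof -
  have "(\<Sum>l<N. (if j = l then 1 else 0) * f l) = (\<Sum>l<N. if j = l then f l else 0)" by (rule sum.cong) auto
  then show ?thesis by (simp add: sum.delta sum.delta')
qed
lemma sum_delta_r: "(\<Sum>l<(N::nat). (f l::complex) * (if l = k then 1 else 0)) = (if k < N then f k else 0)"
proof -
  have "(\<Sum>l<N. f l * (if l = k then 1 else 0)) = (\<Sum>l<N. if l = k then f l else 0)" by (rule sum.cong) auto
  then show ?thesis by (simp add: sum.delta sum.delta')
qed

definition okN :: "nat \<Rightarrow> lser \<Rightarrow> bool" where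
  "okN N X \<longleftrightarrow> (\<forall>p j k. (N \<le> j \<or> N \<le> k) \<longrightarrow> X p j k = 0)"

lemma lmul_lid_left: assumes "okN N X" shows "lmul N (lid N) X = X"
proof (intro ext)
  fix p j k
  have "lmul N (lid N) X p j k = (\<Sum>q\<in>{0}. \<Sum>l<N. lid N q j l * X (p - q) l k)"
    by (rule lmul_eq_sum) (auto simp: lid_def fun_eq_iff)
  also have "\<dots> = X p j k" using assms sum_delta_l[where N=N and j=j and f="\<lambda>l. X p l k"]
    by (cases "j < N") (auto simp: okN_def lid_def)
  finally show "lmul N (lid N) X p j k = X p j k" .
qed

lemma lmul_lid_right: assumes "okN N X" shows "lmul N X (lid N) = X"
proof (intro ext)
  fix p j k
  have "lmul N X (lid N) p j k = (\<Sum>q\<in>{p}. \<Sum>l<N. X q j l * lid N (p - q) l k)"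
    by (rule lmul_eq_sum) (auto simp: lid_def fun_eq_iff)
  also have "\<dots> = X p j k" using assms sum_delta_r[where N=N and k=k and f="\<lambda>l. X p j l"]
    by (cases "k < N") (auto simp: okN_def lid_def)
  finally show "lmul N X (lid N) p j k = X p j k" .
qed

definition tr0 :: "nat \<Rightarrow> lser \<Rightarrow> complex" where
  "tr0 N Z = (\<Sum>j<N. Z 0 j j)"

lemma pair_tr: assumes "lb X" "lb Y" shows "pair N X Y = tr0 N (lmul N X Y)"
proof -
  obtain d where d: "lbd X d" "lbd Y d" using assms by (rule lb2E)
  have "pair N X Y = (\<Sum>q\<in>{d..-d}. \<Sum>j<N. \<Sum>l<N. X q j l * Y (- q) l j)"
    by (rule pair_win[OF d]) auto
  also have "\<dots> = (\<Sum>j<N. \<Sum>q\<in>{d..0-d}. \<Sum>l<N. X q j l * Y (0 - q) l j)"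
    by (simp add: sum.swap[of _ "{d..-d}"])
  also have "\<dots> = tr0 N (lmul N X Y)"
    unfolding tr0_def by (simp add: lmul_win2[OF d])
  finally show ?thesis .
qed

lemma pair_sym: assumes "lb X" "lb Y" shows "pair N X Y = pair N Y X"
proof -
  obtain d where d: "lbd X d" "lbd Y d" using assms by (rule lb2E)
  have "pair N X Y = (\<Sum>q\<in>{d..-d}. \<Sum>j<N. \<Sum>l<N. X q j l * Y (- q) l j)"
    by (rule pair_win[OF d]) auto
  also have "\<dots> = (\<Sum>q\<in>uminus ` {d..-d}. \<Sum>j<N. \<Sum>l<N. X (-q) j l * Y q l j)"
    by (subst sum.reindex) (auto simp: inj_on_def)
  also have "uminus ` {d..-d} = {d..-d::int}"
    by (auto simp: image_iff intro!: exI[of _ "- _"])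
  also have "(\<Sum>q\<in>{d..-d}. \<Sum>j<N. \<Sum>l<N. X (-q) j l * Y q l j) = (\<Sum>q\<in>{d..-d}. \<Sum>j<N. \<Sum>l<N. Y q j l * X (- q) l j)"
    by (subst (2) sum.swap) (simp add: mult.commute)
  also have "\<dots> = pair N Y X"
    by (rule pair_win[OF d(2,1), symmetric]) auto
  finally show ?thesis .
qed

lemma pair_assoc: assumes "lb X" "lb Y" "lb Z"
  shows "pair N X (lmul N Y Z) = pair N (lmul N X Y) Z"
  using assms by (simp add: pair_tr lmul_assoc_lb)

lemma pair_ladd_left: assumes "lb X" "lb Y" "lb Z"
  shows "pair N (ladd X Y) Z = pair N X Z + pair N Y Z"
proof -
  obtain d where d: "lbd X d" "lbd Y d" "lbd Z d" using assms by (rule lb3E)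
  have dd: "lbd (ladd X Y) d" using d unfolding lbd_def by simp
  show ?thesis
    by (simp add: pair_win[OF dd d(3), of "{d..-d}"] pair_win[OF d(1) d(3), of "{d..-d}"]
        pair_win[OF d(2) d(3), of "{d..-d}"] sum.distrib distrib_right)
qed

lemma pair_lsub_left: assumes "lb X" "lb Y" "lb Z"
  shows "pair N (lsub X Y) Z = pair N X Z - pair N Y Z"
proof -
  obtain d where d: "lbd X d" "lbd Y d" "lbd Z d" using assms by (rule lb3E)
  have dd: "lbd (lsub X Y) d" using d unfolding lbd_def by simp
  show ?thesis
    by (simp add: pair_win[OF dd d(3), of "{d..-d}"] pair_win[OF d(1) d(3), of "{d..-d}"]
        pair_win[OF d(2) d(3), of "{d..-d}"] sum_subtractf left_diff_distrib)
qed

lemma pair_lscale_left: assumes "lb X" "lb Z"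
  shows "pair N (lscale c X) Z = c * pair N X Z"
proof -
  obtain d where d: "lbd X d" "lbd Z d" using assms by (rule lb2E)
  have dd: "lbd (lscale c X) d" using d unfolding lbd_def by simp
  show ?thesis
    by (simp add: pair_win[OF dd d(2), of "{d..-d}"] pair_win[OF d(1) d(2), of "{d..-d}"]
        sum_distrib_left algebra_simps)
qed

lemma pair_ladd_right: "lb X \<Longrightarrow> lb Y \<Longrightarrow> lb Z \<Longrightarrow> pair N Z (ladd X Y) = pair N Z X + pair N Z Y"
  by (simp add: pair_sym[of Z] pair_ladd_left)
lemma pair_lsub_right: "lb X \<Longrightarrow> lb Y \<Longrightarrow> lb Z \<Longrightarrow> pair N Z (lsub X Y) = pair N Z X - pair N Z Y"
  by (simp add: pair_sym[of Z] pair_lsub_left)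
lemma pair_lscale_right: "lb X \<Longrightarrow> lb Z \<Longrightarrow> pair N Z (lscale c X) = c * pair N Z X"
  by (simp add: pair_sym[of Z] pair_lscale_left)

definition Rstar :: "lser \<Rightarrow> lser" where
  "Rstar Z = (\<lambda>p j k. if p \<le> 0 then Z p j k else - Z p j k)"

lemma lb_Rstar[simp]: "lb X \<Longrightarrow> lb (Rstar X)"
  unfolding lb_def lbd_def Rstar_def by auto

lemma pair_Rop: assumes "lb B" "lb Z" shows "pair N (Rop B) Z = pair N B (Rstar Z)"
proof -
  obtain d where d: "lbd B d" "lbd Z d" using assms by (rule lb2E)
  have d1: "lbd (Rop B) d" "lbd (Rstar Z) d" using d unfolding lbd_def Rstar_def by auto
  show ?thesis
    by (simp add: pair_win[OF d1(1) d(2), of "{d..-d}"] pair_win[OF d(1) d1(2), of "{d..-d}"])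
      (auto simp: Rstar_def intro!: sum.cong)
qed



definition tw :: "nat \<Rightarrow> lser \<Rightarrow> bool" where
  "tw N X \<longleftrightarrow> (\<forall>p j k. X p j k \<noteq> 0 \<longrightarrow> (int j - int k) mod int N = p mod int N)"

lemma ghat_iff: "X \<in> ghat N \<longleftrightarrow> okN N X \<and> tw N X \<and> lb X"
  unfolding ghat_def okN_def tw_def lb_def lbd_def by auto

lemma ghat_lb[simp]: "X \<in> ghat N \<Longrightarrow> lb X" by (simp add: ghat_iff)
lemma ghat_okN: "X \<in> ghat N \<Longrightarrow> okN N X" by (simp add: ghat_iff)

lemma okN_lmul: "okN N X \<Longrightarrow> okN N Y \<Longrightarrow> okN N (lmul N X Y)"
  unfolding okN_def lmul_def by auto

lemma tw_lmul: assumes "tw N X" "tw N Y" shows "tw N (lmul N X Y)"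
  unfolding tw_def
proof (intro allI impI)
  fix p j k assume "lmul N X Y p j k \<noteq> 0"
  then obtain q where "(\<Sum>l<N. X q j l * Y (p - q) l k) \<noteq> 0"
    unfolding lmul_def using sum.not_neutral_contains_not_neutral by blast
  then obtain l where "X q j l * Y (p - q) l k \<noteq> 0"
    using sum.not_neutral_contains_not_neutral by blast
  then have "X q j l \<noteq> 0" "Y (p - q) l k \<noteq> 0" by auto
  then have 1: "(int j - int l) mod int N = q mod int N" and 2: "(int l - int k) mod int N = (p - q) mod int N"
    using assms unfolding tw_def by auto
  have "(int j - int k) mod int N = ((int j - int l) + (int l - int k)) mod int N" by simp
  also have "\<dots> = ((int j - int l) mod int N + (int l - int k) mod int N) mod int N" by (simp add: mod_add_eq)
  also have "\<dots> = (q mod int N + (p - q) mod int N) mod int N" using 1 2 by simp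
  also have "\<dots> = p mod int N" by (simp add: mod_add_eq)
  finally show "(int j - int k) mod int N = p mod int N" .
qed

lemma ghat_lmul[simp]: "X \<in> ghat N \<Longrightarrow> Y \<in> ghat N \<Longrightarrow> lmul N X Y \<in> ghat N"
  by (simp add: ghat_iff okN_lmul tw_lmul)

lemma ghat_ladd[simp]: assumes "X \<in> ghat N" "Y \<in> ghat N" shows "ladd X Y \<in> ghat N"
proof -
  have "okN N (ladd X Y)" using assms unfolding ghat_iff okN_def by simp
  moreover have "tw N (ladd X Y)" unfolding tw_def
  proof (intro allI impI)
    fix p j k assume "ladd X Y p j k \<noteq> 0"
    then have "X p j k \<noteq> 0 \<or> Y p j k \<noteq> 0" by auto
    then show "(int j - int k) mod int N = p mod int N" using assms unfolding ghat_iff tw_def by auto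
  qed
  ultimately show ?thesis using assms by (simp add: ghat_iff)
qed
lemma ghat_lsub[simp]: assumes "X \<in> ghat N" "Y \<in> ghat N" shows "lsub X Y \<in> ghat N"
proof -
  have "okN N (lsub X Y)" using assms unfolding ghat_iff okN_def by simp
  moreover have "tw N (lsub X Y)" unfolding tw_def
  proof (intro allI impI)
    fix p j k assume "lsub X Y p j k \<noteq> 0"
    then have "X p j k \<noteq> 0 \<or> Y p j k \<noteq> 0" by auto
    then show "(int j - int k) mod int N = p mod int N" using assms unfolding ghat_iff tw_def by auto
  qed
  ultimately show ?thesis using assms by (simp add: ghat_iff)
qed
lemma ghat_lscale[simp]: "X \<in> ghat N \<Longrightarrow> lscale c X \<in> ghat N"
  unfolding ghat_iff okN_def tw_def by auto
lemma ghat_Rop[simp]: "X \<in> ghat N \<Longrightarrow> Rop X \<in> ghat N"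
  unfolding ghat_iff okN_def tw_def by auto
lemma ghat_pi_plus[simp]: "X \<in> ghat N \<Longrightarrow> pi_plus X \<in> ghat N"
  unfolding ghat_iff okN_def tw_def by auto
lemma ghat_pi_minus[simp]: "X \<in> ghat N \<Longrightarrow> pi_minus X \<in> ghat N"
  unfolding ghat_iff okN_def tw_def by auto
lemma ghat_Rstar[simp]: "X \<in> ghat N \<Longrightarrow> Rstar X \<in> ghat N"
  using lb_Rstar[of X] unfolding ghat_iff okN_def tw_def by (auto simp: Rstar_def)
lemma ghat_lid[simp]: "lid N \<in> ghat N"
  using lb_lid[of N] unfolding ghat_iff okN_def tw_def by (auto simp: lid_def)
lemma ghat_zero[simp]: "(\<lambda>p j k. 0) \<in> ghat N"
  unfolding ghat_iff okN_def tw_def by auto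

lemma pair_delta:
  assumes "j < N" "k < N"
  shows "pair N G (\<lambda>q a b. if q = - p \<and> a = k \<and> b = j then 1 else 0) = G p j k"
proof -
  let ?M = "(\<lambda>q a b. if q = - p \<and> a = k \<and> b = j then 1 else 0) :: lser"
  have "pair N G ?M = (\<Sum>q\<in>{p}. \<Sum>a<N. \<Sum>b<N. G q a b * ?M (- q) b a)"
    by (rule pair_eq_sum) (auto simp: fun_eq_iff)
  also have "\<dots> = (\<Sum>a<N. \<Sum>b<N. if a = j then (if b = k then G p a b else 0) else 0)"
    by (auto intro!: sum.cong)
  also have "\<dots> = (\<Sum>a<N. if a = j then G p a k else 0)"
    using assms by (intro sum.cong refl) (simp add: sum.delta[where S="{..<N}"])
  also have "\<dots> = G p j k" using assms by (simp add: sum.delta[where S="{..<N}"])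
  finally show ?thesis .
qed

lemma nondeg:
  assumes G: "G \<in> ghat N" and z: "\<And>M. M \<in> ghat N \<Longrightarrow> pair N G M = 0"
  shows "G = (\<lambda>p j k. 0)"
proof (intro ext)
  fix p j k
  show "G p j k = 0"
  proof (rule ccontr)
    assume nz: "G p j k \<noteq> 0"
    then have jk: "j < N" "k < N" using G unfolding ghat_iff okN_def by (meson not_le)+
    have t: "(int j - int k) mod int N = p mod int N" using G nz unfolding ghat_iff tw_def by auto
    let ?M = "(\<lambda>q a b. if q = - p \<and> a = k \<and> b = j then 1 else 0) :: lser"
    have "(int k - int j) mod int N = (- p) mod int N"
    proof -
      have "(int k - int j) mod int N = (- (int j - int k)) mod int N" by simp
      also have "\<dots> = (- ((int j - int k) mod int N)) mod int N" by (simp add: mod_minus_eq)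
      also have "\<dots> = (- (p mod int N)) mod int N" using t by simp
      also have "\<dots> = (- p) mod int N" by (simp add: mod_minus_eq)
      finally show ?thesis .
    qed
    then have "?M \<in> ghat N" using jk unfolding ghat_iff okN_def tw_def lb_def lbd_def
      by (auto intro!: exI[of _ "- p"])
    then have "pair N G ?M = 0" by (rule z)
    then show False using pair_delta[OF jk, of G p] nz by simp
  qed
qed

lemma has_grad_unique:
  assumes "has_grad N \<phi> L G" "has_grad N \<phi> L G'" shows "G' = G"
proof -
  have G: "G \<in> ghat N" and G': "G' \<in> ghat N" using assms unfolding has_grad_def by auto
  have "lsub G' G = (\<lambda>p j k. 0)"
  proof (rule nondeg)
    show "lsub G' G \<in> ghat N" using G G' by simp
    fix M assume M: "M \<in> ghat N"
    have "pair N G M = pair N G' M"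
      using assms M unfolding has_grad_def by (meson DERIV_unique)
    then show "pair N (lsub G' G) M = 0" using G G' M by (simp add: pair_lsub_left)
  qed
  then show ?thesis by (auto simp: fun_eq_iff lsub_def)
qed

lemma grad_eq: "has_grad N \<phi> L G \<Longrightarrow> grad N \<phi> L = G"
  unfolding grad_def by (rule the_equality) (auto intro: has_grad_unique)

lemma smooth_has_grad: "smooth_fn N \<phi> \<Longrightarrow> L \<in> ghat N \<Longrightarrow> has_grad N \<phi> L (grad N \<phi> L)"
  unfolding smooth_fn_def by (metis grad_eq)

lemma smooth_grad_ghat[simp]: "smooth_fn N \<phi> \<Longrightarrow> L \<in> ghat N \<Longrightarrow> grad N \<phi> L \<in> ghat N"
  using smooth_has_grad has_grad_def by blast



definition Ep :: "nat \<Rightarrow> nat \<Rightarrow> nat \<Rightarrow> nat \<Rightarrow> complex" where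
  "Ep N n j k = (if j < N \<and> k < N \<and> j = (k + n) mod N then 1 else 0)"

definition ser :: "nat \<Rightarrow> complex fps \<Rightarrow> lser" where
  "ser N f = (\<lambda>p j k. if p < 0 then 0 else fps_nth f (nat p) * Ep N (nat p) j k)"

lemma lbd_ser: "lbd (ser N f) 0" unfolding lbd_def ser_def by auto
lemma lb_ser[simp]: "lb (ser N f)" using lbd_ser unfolding lb_def by blast

lemma ghat_ser[simp]: "ser N f \<in> ghat N"
  unfolding ghat_iff
proof (intro conjI)
  show "okN N (ser N f)" unfolding okN_def ser_def Ep_def by auto
  show "lb (ser N f)" by simp
  show "tw N (ser N f)" unfolding tw_def
  proof (intro allI impI)
    fix p j k assume nz: "ser N f p j k \<noteq> 0"
    then have p: "0 \<le> p" and j: "j = (k + nat p) mod N" and "k < N"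
      unfolding ser_def Ep_def by (auto split: if_splits)
    have "int j = (int k + p) mod int N" using j p by (simp add: zmod_int)
    then have "(int j - int k) mod int N = ((int k + p) mod int N - int k) mod int N" by simp
    also have "\<dots> = (int k + p - int k) mod int N" by (simp add: mod_diff_left_eq)
    also have "\<dots> = p mod int N" by simp
    finally show "(int j - int k) mod int N = p mod int N" .
  qed
qed

lemma Ep_mul: "(\<Sum>l<N. Ep N a j l * Ep N b l k) = Ep N (a + b) j k"
proof (cases "k < N")
  case True
  then have N: "0 < N" by simp
  have "(\<Sum>l<N. Ep N a j l * Ep N b l k) = (\<Sum>l<N. if l = (k + b) mod N then Ep N a j l else 0)"
    by (rule sum.cong) (auto simp: Ep_def True)
  also have "\<dots> = Ep N a j ((k + b) mod N)" using N by (simp add: sum.delta[where S="{..<N}"])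
  also have "\<dots> = Ep N (a + b) j k"
  proof -
    have "((k + b) mod N + a) mod N = (k + (a + b)) mod N" by (metis add.assoc add.commute mod_add_left_eq)
    then show ?thesis using N True by (simp add: Ep_def)
  qed
  finally show ?thesis .
next
  case False
  then show ?thesis by (simp add: Ep_def)
qed

lemma ser_mult: "lmul N (ser N f) (ser N g) = ser N (f * g)"
proof (intro ext)
  fix p j k
  have w: "lmul N (ser N f) (ser N g) p j k = (\<Sum>q\<in>{0..p}. \<Sum>l<N. ser N f q j l * ser N g (p - q) l k)"
    by (rule lmul_win[OF lbd_ser lbd_ser]) auto
  show "lmul N (ser N f) (ser N g) p j k = ser N (f * g) p j k"
  proof (cases "p < 0")
    case True then show ?thesis by (subst w) (simp add: ser_def)
  next
    case False
    have "(\<Sum>q\<in>{0..p}. \<Sum>l<N. ser N f q j l * ser N g (p - q) l k)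
        = (\<Sum>q\<in>{0..p}. fps_nth f (nat q) * fps_nth g (nat (p - q)) * Ep N (nat p) j k)"
    proof (rule sum.cong[OF refl])
      fix q assume q: "q \<in> {0..p}"
      then have "nat q + nat (p - q) = nat p" by auto
      then have "(\<Sum>l<N. Ep N (nat q) j l * Ep N (nat (p - q)) l k) = Ep N (nat p) j k"
        by (simp add: Ep_mul)
      moreover have "(\<Sum>l<N. ser N f q j l * ser N g (p - q) l k)
          = fps_nth f (nat q) * fps_nth g (nat (p - q)) * (\<Sum>l<N. Ep N (nat q) j l * Ep N (nat (p - q)) l k)"
        using q by (simp add: ser_def sum_distrib_left algebra_simps)
      ultimately show "(\<Sum>l<N. ser N f q j l * ser N g (p - q) l k) = fps_nth f (nat q) * fps_nth g (nat (p - q)) * Ep N (nat p) j k"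
        by simp
    qed
    also have "\<dots> = (\<Sum>i\<in>{0..nat p}. fps_nth f i * fps_nth g (nat p - i)) * Ep N (nat p) j k"
    proof -
      have "{0..p} = int ` {0..nat p}" using False
        by (simp add: image_int_atLeastAtMost)
      then have "(\<Sum>q\<in>{0..p}. fps_nth f (nat q) * fps_nth g (nat (p - q)) * Ep N (nat p) j k)
          = (\<Sum>i\<in>{0..nat p}. fps_nth f (nat (int i)) * fps_nth g (nat (p - int i)) * Ep N (nat p) j k)"
        by (simp add: sum.reindex)
      also have "\<dots> = (\<Sum>i\<in>{0..nat p}. fps_nth f i * fps_nth g (nat p - i) * Ep N (nat p) j k)"
      proof (rule sum.cong[OF refl])
        fix i assume "i \<in> {0..nat p}"
        then have "nat (p - int i) = nat p - i" using False by auto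
        then show "fps_nth f (nat (int i)) * fps_nth g (nat (p - int i)) * Ep N (nat p) j k = fps_nth f i * fps_nth g (nat p - i) * Ep N (nat p) j k"
          by simp
      qed
      finally show ?thesis by (simp add: sum_distrib_right)
    qed
    also have "\<dots> = ser N (f * g) p j k" using False by (simp add: ser_def fps_mult_nth)
    finally show ?thesis by (simp add: w)
  qed
qed

lemma ser_one: "ser N 1 = lid N"
  by (auto simp: ser_def lid_def Ep_def fun_eq_iff)

lemma ser_X: "ser N fps_X = calE N"
  by (auto simp: ser_def calE_def Ep_def fun_eq_iff)

lemma ser_add: "ser N (f + g) = ladd (ser N f) (ser N g)"
  by (auto simp: ser_def fun_eq_iff algebra_simps)
lemma ser_diff: "ser N (f - g) = lsub (ser N f) (ser N g)"
  by (auto simp: ser_def fun_eq_iff algebra_simps)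
lemma ser_const_mult: "ser N (fps_const c * f) = lscale c (ser N f)"
  by (auto simp: ser_def fun_eq_iff algebra_simps)

definition gg :: "complex \<Rightarrow> complex fps" where "gg c = Abs_fps (\<lambda>n. c ^ n)"

lemma gg_nth[simp]: "fps_nth (gg c) n = c ^ n" by (simp add: gg_def)

lemma gg_inv: "(1 - fps_const c * fps_X) * gg c = 1"
proof (rule fps_ext)
  fix n
  show "fps_nth ((1 - fps_const c * fps_X) * gg c) n = fps_nth 1 n"
    by (cases n) (simp_all add: algebra_simps mult.assoc fps_X_mult_nth)
qed

lemma gg_inv2: "gg c * (1 - fps_const c * fps_X) = 1"
  using gg_inv by (simp add: mult.commute)

lemma lpow_ser: "lpow N (calE N) n = ser N (fps_X ^ n)"
  by (induction n) (simp_all add: ser_one ser_X[symmetric] ser_mult)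

lemma calFinv_ser: "calFinv N \<alpha> = ser N (gg (complex_of_real \<alpha>))"
  by (auto simp: calFinv_def ser_def lpow_ser fun_eq_iff)

lemma calF_ser: "calF N \<alpha> = ser N (1 - fps_const (complex_of_real \<alpha>) * fps_X)"
  by (simp add: calF_def ser_diff ser_one ser_const_mult ser_X)

lemma F_Fi: "lmul N (calF N \<alpha>) (calFinv N \<alpha>) = lid N"
  by (simp add: calF_ser calFinv_ser ser_mult gg_inv ser_one)
lemma Fi_F: "lmul N (calFinv N \<alpha>) (calF N \<alpha>) = lid N"
  by (simp add: calF_ser calFinv_ser ser_mult gg_inv2 ser_one)

lemma ghat_calF[simp]: "calF N \<alpha> \<in> ghat N" by (simp add: calF_ser)
lemma ghat_calFinv[simp]: "calFinv N \<alpha> \<in> ghat N" by (simp add: calFinv_ser)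
lemma ghat_calE[simp]: "calE N \<in> ghat N" by (simp add: ser_X[symmetric])

lemma ser_comm: "lmul N (ser N f) (ser N g) = lmul N (ser N g) (ser N f)"
  by (simp add: ser_mult mult.commute)



lemma lb_calF[simp]: "lb (calF N \<alpha>)" using ghat_calF ghat_lb by blast
lemma lb_calFinv[simp]: "lb (calFinv N \<alpha>)" using ghat_calFinv ghat_lb by blast
lemma lb_calE[simp]: "lb (calE N)" using ghat_calE ghat_lb by blast

lemma Rstar_lsub: "Rstar (lsub X Y) = lsub (Rstar X) (Rstar Y)"
  by (auto simp: Rstar_def fun_eq_iff)

definition Vg :: "nat \<Rightarrow> real \<Rightarrow> lser \<Rightarrow> lser \<Rightarrow> lser" where
  "Vg N \<alpha> L A = lscale (1/2) (ladd
      (lsub (lmul N L (lmul N (Rop A) (calF N \<alpha>))) (lmul N (lmul N (calF N \<alpha>) (Rop A)) L))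
      (Rstar (lsub (lmul N L (lmul N A (calF N \<alpha>))) (lmul N (lmul N (calF N \<alpha>) A) L))))"

lemma ghat_Vg[simp]: "L \<in> ghat N \<Longrightarrow> A \<in> ghat N \<Longrightarrow> Vg N \<alpha> L A \<in> ghat N"
  by (simp add: Vg_def)

lemma pair_cyc1: "lb X \<Longrightarrow> lb Y \<Longrightarrow> lb Z \<Longrightarrow> lb L \<Longrightarrow>
   pair N (lmul N X (lmul N Y Z)) L = pair N Z (lmul N L (lmul N X Y))"
proof -
  assume h: "lb X" "lb Y" "lb Z" "lb L"
  have "pair N (lmul N X (lmul N Y Z)) L = pair N (lmul N (lmul N X Y) Z) L"
    using h by (simp add: lmul_assoc_lb)
  also have "\<dots> = pair N (lmul N X Y) (lmul N Z L)" using h by (simp add: pair_assoc)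
  also have "\<dots> = pair N (lmul N Z L) (lmul N X Y)" using h by (simp add: pair_sym)
  also have "\<dots> = pair N Z (lmul N L (lmul N X Y))" using h by (simp add: pair_assoc)
  finally show ?thesis .
qed

lemma pair_cyc2: "lb X \<Longrightarrow> lb Y \<Longrightarrow> lb Z \<Longrightarrow> lb L \<Longrightarrow>
   pair N (lmul N X (lmul N Y Z)) L = pair N X (lmul N (lmul N Y Z) L)"
  by (simp add: pair_assoc)

lemma PB1_Vg:
  assumes L: "L \<in> ghat N" and A: "A \<in> ghat N" and B: "B \<in> ghat N"
  shows "(1/2) * pair N (ladd (brF N \<alpha> (Rop A) B) (brF N \<alpha> A (Rop B))) L = pair N B (Vg N \<alpha> L A)"
proof -
  let ?F = "calF N \<alpha>"
  have l: "lb L" "lb A" "lb B" "lb ?F" "lb (Rop A)" "lb (Rop B)" using L A B by auto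
  let ?X1 = "lmul N L (lmul N (Rop A) ?F)"
  let ?X2 = "lmul N (lmul N ?F (Rop A)) L"
  let ?W = "lsub (lmul N L (lmul N A ?F)) (lmul N (lmul N ?F A) L)"
  have "pair N (ladd (brF N \<alpha> (Rop A) B) (brF N \<alpha> A (Rop B))) L
     = (pair N (lmul N (Rop A) (lmul N ?F B)) L - pair N (lmul N B (lmul N ?F (Rop A))) L)
     + (pair N (lmul N A (lmul N ?F (Rop B))) L - pair N (lmul N (Rop B) (lmul N ?F A)) L)"
    using l by (simp add: brF_def pair_ladd_left pair_lsub_left)
  also have "\<dots> = (pair N B ?X1 - pair N B ?X2) + (pair N (Rop B) (lmul N L (lmul N A ?F)) - pair N (Rop B) (lmul N (lmul N ?F A) L))"
    using l pair_cyc1[of "Rop A" ?F B L N] pair_cyc2[of B ?F "Rop A" L N]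
      pair_cyc1[of A ?F "Rop B" L N] pair_cyc2[of "Rop B" ?F A L N] by simp
  also have "\<dots> = (pair N B ?X1 - pair N B ?X2) + pair N B (Rstar ?W)"
    using l by (simp add: pair_lsub_right pair_Rop Rstar_lsub)
  also have "\<dots> = pair N B (ladd (lsub ?X1 ?X2) (Rstar ?W))"
    using l by (simp add: pair_lsub_right pair_ladd_right)
  finally show ?thesis using l by (simp add: Vg_def pair_lscale_right)
qed

lemma ham_vf_Vg:
  assumes H: "smooth_fn N H" and L: "L \<in> ghat N"
  shows "ham_vf N \<alpha> H L (Vg N \<alpha> L (grad N H L))"
  unfolding ham_vf_def
proof (intro conjI allI impI)
  show "Vg N \<alpha> L (grad N H L) \<in> ghat N" using H L by simp
  fix f assume f: "smooth_fn N f"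
  show "PB1 N \<alpha> H f L = pair N (grad N f L) (Vg N \<alpha> L (grad N H L))"
    unfolding PB1_def by (rule PB1_Vg) (use H L f in auto)
qed



lemma top_deg:
  assumes "ubd X a" "ubd Y b"
  shows "lmul N X Y (a + b) j k = (\<Sum>l<N. X a j l * Y b l k)"
proof -
  have "lmul N X Y (a + b) j k = (\<Sum>q\<in>{a}. \<Sum>l<N. X q j l * Y (a + b - q) l k)"
  proof (rule lmul_eq_sum)
    fix q assume "q \<notin> {a}"
    then have "a < q \<or> b < a + b - q" by auto
    then show "X q = (\<lambda>a b. 0) \<or> Y (a + b - q) = (\<lambda>a b. 0)" using ubdD[OF assms(1)] ubdD[OF assms(2)] by auto
  qed simp
  then show ?thesis by simp
qed

lemma tw_neg: "(int j - int k) mod n = p mod n \<Longrightarrow> (int k - int j) mod n = (- p) mod (n::int)"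
proof -
  assume t: "(int j - int k) mod n = p mod n"
  have "(int k - int j) mod n = (- (int j - int k)) mod n" by simp
  also have "\<dots> = (- ((int j - int k) mod n)) mod n" by (simp add: mod_minus_eq)
  also have "\<dots> = (- (p mod n)) mod n" using t by simp
  also have "\<dots> = (- p) mod n" by (simp add: mod_minus_eq)
  finally show ?thesis .
qed

lemma tw_solve: "j < N \<Longrightarrow> (int j - int k) mod int N = p mod int N \<Longrightarrow> int j = (int k + p) mod int N"
proof -
  assume j: "j < N" and t: "(int j - int k) mod int N = p mod int N"
  have "int j = int j mod int N" using j by simp
  also have "\<dots> = ((int j - int k) + int k) mod int N" by simp
  also have "\<dots> = ((int j - int k) mod int N + int k) mod int N" by (simp add: mod_add_left_eq)
  also have "\<dots> = (p mod int N + int k) mod int N" using t by simp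
  also have "\<dots> = (int k + p) mod int N" by (metis add.commute mod_add_left_eq)
  finally show ?thesis .
qed

lemma Tdir_intro:
  assumes V: "V \<in> ghat N" and up: "\<And>p j k. 0 < p \<Longrightarrow> V p j k = 0"
    and lo: "\<And>p j k. p < - int m \<Longrightarrow> V p j k = 0"
  shows "V \<in> Tdir N m"
proof -
  define b where "b = (\<lambda>j. V 0 j j)"
  define a where "a = (\<lambda>i j. V (- int i) j ((j + i) mod N))"
  have ok: "\<And>p j k. N \<le> j \<or> N \<le> k \<Longrightarrow> V p j k = 0" using V unfolding ghat_iff okN_def by blast
  have t: "\<And>p j k. V p j k \<noteq> 0 \<Longrightarrow> (int j - int k) mod int N = p mod int N"
    using V unfolding ghat_iff tw_def by blast
  have "V = Tvar N m b a"
  proof (intro ext)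
    fix p j k
    show "V p j k = Tvar N m b a p j k"
    proof (cases "0 < p \<or> p < - int m")
      case True then show ?thesis using up lo by (auto simp: Tvar_def)
    next
      case False
      show ?thesis
      proof (cases "j < N \<and> k < N")
        case False then show ?thesis using ok by (auto simp: Tvar_def)
      next
        case True
        then have jk: "j < N" "k < N" by auto
        show ?thesis
        proof (cases "p = 0")
          case True
          have "V 0 j k \<noteq> 0 \<Longrightarrow> j = k"
          proof -
            assume "V 0 j k \<noteq> 0"
            then have "(int j - int k) mod int N = 0 mod int N" using t[of 0 j k] by simp
            then have "int j = (int k + 0) mod int N" by (rule tw_solve[OF jk(1)])
            then show "j = k" using jk by simp
          qed
          then show ?thesis using True jk by (auto simp: Tvar_def b_def)
        next
          case p0: False
          then have pr: "- int m \<le> p" "p \<le> -1" using False by auto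
          have "V p j k \<noteq> 0 \<Longrightarrow> k = (j + nat (- p)) mod N"
          proof -
            assume "V p j k \<noteq> 0"
            then have "(int k - int j) mod int N = (- p) mod int N" using t tw_neg by blast
            then have "int k = (int j + - p) mod int N" using tw_solve[OF jk(2)] by blast
            also have "\<dots> = int ((j + nat (- p)) mod N)" using pr by (simp add: zmod_int)
            finally show ?thesis by simp
          qed
          then show ?thesis using pr jk p0 by (auto simp: Tvar_def a_def)
        qed
      qed
    qed
  qed
  then show ?thesis unfolding Tdir_def by blast
qed

lemma ghat_Tvar[simp]: "Tvar N m b a \<in> ghat N"
  unfolding ghat_iff
proof (intro conjI)
  show "okN N (Tvar N m b a)" unfolding okN_def Tvar_def by auto
  show "lb (Tvar N m b a)" unfolding lb_def lbd_def Tvar_def by (rule exI[of _ "- int m"]) auto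
  show "tw N (Tvar N m b a)" unfolding tw_def
  proof (intro allI impI)
    fix p j k assume nz: "Tvar N m b a p j k \<noteq> 0"
    show "(int j - int k) mod int N = p mod int N"
    proof (cases "p = 0")
      case True then show ?thesis using nz by (auto simp: Tvar_def split: if_splits)
    next
      case False
      then have c: "- int m \<le> p" "p \<le> -1" "k = (j + nat (- p)) mod N" using nz by (auto simp: Tvar_def split: if_splits)
      then have "int k = (int j + - p) mod int N" by (simp add: zmod_int)
      then have "(int k - int j) mod int N = (int j + - p - int j) mod int N" by (simp add: mod_diff_left_eq)
      then have "(int k - int j) mod int N = (- p) mod int N" by simp
      from tw_neg[OF this] show ?thesis by simp
    qed
  qed
qed

lemma Tset_ghat[simp]: "L \<in> Tset N m \<Longrightarrow> L \<in> ghat N"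
  unfolding Tset_def by auto

lemma Tset_lbd: "L \<in> Tset N m \<Longrightarrow> lbd L (- int m)"
  unfolding Tset_def lbd_def by (auto simp: Tvar_def calE_def)

lemma Tset_ubd: "L \<in> Tset N m \<Longrightarrow> ubd L 1"
  unfolding Tset_def ubd_def by (auto simp: Tvar_def calE_def)

lemma Tset_top: "L \<in> Tset N m \<Longrightarrow> L 1 = calE N 1"
  unfolding Tset_def by (auto simp: Tvar_def calE_def fun_eq_iff)

lemma F_lbd: "lbd (calF N \<alpha>) 0"
  unfolding lbd_def calF_def by (auto simp: lid_def calE_def)
lemma F_ubd: "ubd (calF N \<alpha>) 1"
  unfolding ubd_def calF_def by (auto simp: lid_def calE_def)
lemma F_top: "calF N \<alpha> 1 j k = - complex_of_real \<alpha> * calE N 1 j k"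
  unfolding calF_def by (auto simp: lid_def calE_def)

lemma pp_lbd: "lbd (pi_plus A) 0" unfolding lbd_def by auto
lemma pm_ubd: "ubd (pi_minus A) (-1)" unfolding ubd_def by auto

lemma half_lemma1: "(1/2::complex) * ((x1 - y1 - (x2 - y2)) + (x1 + y1 - (x2 + y2))) = x1 - x2"
  by (simp add: field_simps)
lemma half_lemma2: "(1/2::complex) * ((x1 - y1 - (x2 - y2)) + - (x1 + y1 - (x2 + y2))) = - (y1 - y2)"
  by (simp add: field_simps)

lemma Vg_pt:
  assumes L: "L \<in> ghat N" and A: "A \<in> ghat N"
  shows "Vg N \<alpha> L A p j k = (if p \<le> 0 then
       lmul N L (lmul N (pi_plus A) (calF N \<alpha>)) p j k - lmul N (lmul N (calF N \<alpha>) (pi_plus A)) L p j k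
     else - (lmul N L (lmul N (pi_minus A) (calF N \<alpha>)) p j k - lmul N (lmul N (calF N \<alpha>) (pi_minus A)) L p j k))"
proof -
  have l: "lb L" "lb A" "lb (calF N \<alpha>)" "lb (pi_plus A)" "lb (pi_minus A)" using L A by auto
  have e1: "A = ladd (pi_plus A) (pi_minus A)" by (auto simp: fun_eq_iff)
  have e2: "Rop A = lsub (pi_plus A) (pi_minus A)" by (auto simp: fun_eq_iff)
  have "Vg N \<alpha> L A = lscale (1/2) (ladd
      (lsub (lmul N L (lmul N (lsub (pi_plus A) (pi_minus A)) (calF N \<alpha>))) (lmul N (lmul N (calF N \<alpha>) (lsub (pi_plus A) (pi_minus A))) L))
      (Rstar (lsub (lmul N L (lmul N (ladd (pi_plus A) (pi_minus A)) (calF N \<alpha>))) (lmul N (lmul N (calF N \<alpha>) (ladd (pi_plus A) (pi_minus A))) L))))"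
    unfolding Vg_def using e1 e2 by simp
  also have "\<dots> = lscale (1/2) (ladd
      (lsub (lsub (lmul N L (lmul N (pi_plus A) (calF N \<alpha>))) (lmul N L (lmul N (pi_minus A) (calF N \<alpha>))))
            (lsub (lmul N (lmul N (calF N \<alpha>) (pi_plus A)) L) (lmul N (lmul N (calF N \<alpha>) (pi_minus A)) L)))
      (Rstar (lsub (ladd (lmul N L (lmul N (pi_plus A) (calF N \<alpha>))) (lmul N L (lmul N (pi_minus A) (calF N \<alpha>))))
            (ladd (lmul N (lmul N (calF N \<alpha>) (pi_plus A)) L) (lmul N (lmul N (calF N \<alpha>) (pi_minus A)) L)))))"
    using l by (simp add: lmul_lsub_left lmul_lsub_right lmul_ladd_left lmul_ladd_right)
  finally have eq: "Vg N \<alpha> L A p j k = (lscale (1/2) (ladd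
      (lsub (lsub (lmul N L (lmul N (pi_plus A) (calF N \<alpha>))) (lmul N L (lmul N (pi_minus A) (calF N \<alpha>))))
            (lsub (lmul N (lmul N (calF N \<alpha>) (pi_plus A)) L) (lmul N (lmul N (calF N \<alpha>) (pi_minus A)) L)))
      (Rstar (lsub (ladd (lmul N L (lmul N (pi_plus A) (calF N \<alpha>))) (lmul N L (lmul N (pi_minus A) (calF N \<alpha>))))
            (ladd (lmul N (lmul N (calF N \<alpha>) (pi_plus A)) L) (lmul N (lmul N (calF N \<alpha>) (pi_minus A)) L)))))) p j k"
    by simp
  show ?thesis unfolding eq by (simp only: lscale_apply ladd_apply lsub_apply Rstar_def half_lemma1 half_lemma2 if_distrib) simp
qed

lemma Vg_Tdir:
  assumes L: "L \<in> Tset N m" and A: "A \<in> ghat N"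
  shows "Vg N \<alpha> L A \<in> Tdir N m"
proof (rule Tdir_intro)
  let ?F = "calF N \<alpha>"
  have LG: "L \<in> ghat N" using L by simp
  show "Vg N \<alpha> L A \<in> ghat N" using LG A by simp
  fix p j k
  show "p < - int m \<Longrightarrow> Vg N \<alpha> L A p j k = 0"
  proof -
    assume p: "p < - int m"
    have a1: "lbd (lmul N L (lmul N (pi_plus A) ?F)) (- int m + (0 + 0))"
      by (intro lbd_lmul Tset_lbd[OF L] pp_lbd F_lbd)
    have a2: "lbd (lmul N (lmul N ?F (pi_plus A)) L) ((0 + 0) + - int m)"
      by (intro lbd_lmul Tset_lbd[OF L] pp_lbd F_lbd)
    show ?thesis using p a1 a2 unfolding Vg_pt[OF LG A] lbd_def by auto
  qed
  show "0 < p \<Longrightarrow> Vg N \<alpha> L A p j k = 0"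
  proof -
    assume p: "0 < p"
    have a1: "ubd (lmul N L (lmul N (pi_minus A) ?F)) (1 + (-1 + 1))"
      by (intro ubd_lmul Tset_ubd[OF L] pm_ubd F_ubd)
    have a2: "ubd (lmul N (lmul N ?F (pi_minus A)) L) ((1 + -1) + 1)"
      by (intro ubd_lmul Tset_ubd[OF L] pm_ubd F_ubd)
    have "lmul N L (lmul N (pi_minus A) ?F) p j k = lmul N (lmul N ?F (pi_minus A)) L p j k"
    proof (cases "p = 1")
      case False
      then show ?thesis using p a1 a2 unfolding ubd_def by auto
    next
      case True
      let ?e = "calE N 1" and ?c = "pi_minus A (-1)" and ?a = "complex_of_real \<alpha>"
      have u1: "ubd (lmul N (pi_minus A) ?F) (-1 + 1)" by (intro ubd_lmul pm_ubd F_ubd)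
      have u2: "ubd (lmul N ?F (pi_minus A)) (1 + -1)" by (intro ubd_lmul pm_ubd F_ubd)
      have "lmul N L (lmul N (pi_minus A) ?F) 1 j k = (\<Sum>l<N. L 1 j l * lmul N (pi_minus A) ?F 0 l k)"
        using top_deg[OF Tset_ubd[OF L] u1, of N j k] by simp
      also have "\<dots> = (\<Sum>l<N. ?e j l * (\<Sum>l'<N. ?c l l' * (- ?a * ?e l' k)))"
        using top_deg[OF pm_ubd[of A] F_ubd[of N \<alpha>]] by (simp add: Tset_top[OF L] F_top)
      also have "\<dots> = (\<Sum>l<N. \<Sum>l'<N. - ?a * (?e j l * ?c l l' * ?e l' k))"
        by (simp add: sum_distrib_left algebra_simps)
      finally have lhs: "lmul N L (lmul N (pi_minus A) ?F) 1 j k = (\<Sum>l<N. \<Sum>l'<N. - ?a * (?e j l * ?c l l' * ?e l' k))" .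
      have "lmul N (lmul N ?F (pi_minus A)) L 1 j k = (\<Sum>l<N. lmul N ?F (pi_minus A) 0 j l * L 1 l k)"
        using top_deg[OF u2 Tset_ubd[OF L], of N j k] by simp
      also have "\<dots> = (\<Sum>l<N. (\<Sum>l'<N. (- ?a * ?e j l') * ?c l' l) * ?e l k)"
        using top_deg[OF F_ubd[of N \<alpha>] pm_ubd[of A]] by (simp add: Tset_top[OF L] F_top)
      also have "\<dots> = (\<Sum>l<N. \<Sum>l'<N. - ?a * (?e j l' * ?c l' l * ?e l k))"
        by (simp add: sum_distrib_right sum_distrib_left algebra_simps)
      also have "\<dots> = (\<Sum>l'<N. \<Sum>l<N. - ?a * (?e j l' * ?c l' l * ?e l k))"
        by (rule sum.swap)
      finally show ?thesis using lhs True by simp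
    qed
    then show ?thesis using p unfolding Vg_pt[OF LG A] by simp
  qed
qed



definition cdv :: "(complex \<Rightarrow> lser) \<Rightarrow> lser \<Rightarrow> complex \<Rightarrow> bool" where
  "cdv \<gamma> \<gamma>' s \<longleftrightarrow> (\<forall>p j k. ((\<lambda>t. \<gamma> t p j k) has_field_derivative \<gamma>' p j k) (at s))"
definition ulbd :: "(complex \<Rightarrow> lser) \<Rightarrow> int \<Rightarrow> bool" where
  "ulbd \<gamma> d \<longleftrightarrow> (\<forall>t. lbd (\<gamma> t) d)"

lemma cdv_lbd: assumes "ulbd \<gamma> d" "cdv \<gamma> \<gamma>' s" shows "lbd \<gamma>' d"
  unfolding lbd_def
proof (intro allI impI)
  fix p j k assume p: "p < d"
  have "(\<lambda>t. \<gamma> t p j k) = (\<lambda>t. 0)" using assms(1) p unfolding ulbd_def lbd_def by auto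
  then have "((\<lambda>t. \<gamma> t p j k) has_field_derivative 0) (at s)" by simp
  moreover have "((\<lambda>t. \<gamma> t p j k) has_field_derivative \<gamma>' p j k) (at s)" using assms(2) unfolding cdv_def by blast
  ultimately show "\<gamma>' p j k = 0" using DERIV_unique by blast
qed

lemma cdv_lmul:
  assumes A: "ulbd \<alpha> a" and B: "ulbd \<beta> b" and dA: "cdv \<alpha> \<alpha>' s" and dB: "cdv \<beta> \<beta>' s"
  shows "cdv (\<lambda>t. lmul N (\<alpha> t) (\<beta> t)) (ladd (lmul N \<alpha>' (\<beta> s)) (lmul N (\<alpha> s) \<beta>')) s"
  unfolding cdv_def
proof (intro allI)
  fix p j k
  have la: "lbd \<alpha>' a" using cdv_lbd[OF A dA] .
  have lb': "lbd \<beta>' b" using cdv_lbd[OF B dB] .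
  have At: "\<And>t. lbd (\<alpha> t) a" using A unfolding ulbd_def by blast
  have Bt: "\<And>t. lbd (\<beta> t) b" using B unfolding ulbd_def by blast
  define Q where "Q = {a..p-b}"
  have fQ: "finite Q" and sQ: "{a..p-b} \<subseteq> Q" by (auto simp: Q_def)
  have e: "(\<lambda>t. lmul N (\<alpha> t) (\<beta> t) p j k) = (\<lambda>t. \<Sum>q\<in>Q. \<Sum>l<N. \<alpha> t q j l * \<beta> t (p - q) l k)"
    by (rule ext, rule lmul_win[OF At Bt fQ sQ])
  have d: "((\<lambda>t. \<Sum>q\<in>Q. \<Sum>l<N. \<alpha> t q j l * \<beta> t (p - q) l k) has_field_derivative
      (\<Sum>q\<in>Q. \<Sum>l<N. \<alpha>' q j l * \<beta> s (p - q) l k + \<beta>' (p - q) l k * \<alpha> s q j l)) (at s)"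
    using dA dB unfolding cdv_def by (intro DERIV_sum DERIV_mult) auto
  have r: "ladd (lmul N \<alpha>' (\<beta> s)) (lmul N (\<alpha> s) \<beta>') p j k
      = (\<Sum>q\<in>Q. \<Sum>l<N. \<alpha>' q j l * \<beta> s (p - q) l k + \<beta>' (p - q) l k * \<alpha> s q j l)"
    by (simp add: lmul_win[OF la Bt fQ sQ] lmul_win[OF At lb' fQ sQ] sum.distrib mult.commute)
  show "((\<lambda>t. lmul N (\<alpha> t) (\<beta> t) p j k) has_field_derivative ladd (lmul N \<alpha>' (\<beta> s)) (lmul N (\<alpha> s) \<beta>') p j k) (at s)"
    using d unfolding e r .
qed

lemma ulbd_lmul: "ulbd \<alpha> a \<Longrightarrow> ulbd \<beta> b \<Longrightarrow> ulbd (\<lambda>t. lmul N (\<alpha> t) (\<beta> t)) (a + b)"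
  unfolding ulbd_def by (simp add: lbd_lmul)

lemma ulbd_const: "lbd X d \<Longrightarrow> ulbd (\<lambda>t. X) d" unfolding ulbd_def by simp
lemma cdv_const: "cdv (\<lambda>t. X) (\<lambda>p j k. 0) s" unfolding cdv_def by simp

lemma lmul_zero_left[simp]: "lmul N (\<lambda>p j k. 0) X = (\<lambda>p j k. 0)"
  by (simp add: lmul_def fun_eq_iff)
lemma lmul_zero_right[simp]: "lmul N X (\<lambda>p j k. 0) = (\<lambda>p j k. 0)"
  by (simp add: lmul_def fun_eq_iff)
lemma ladd_zero_left[simp]: "ladd (\<lambda>p j k. 0) X = X" by (simp add: ladd_def)
lemma ladd_zero_right[simp]: "ladd X (\<lambda>p j k. 0) = X" by (simp add: ladd_def)

lemma adm_of_cdv: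
  assumes "\<And>s. \<gamma> s \<in> ghat N" "ulbd \<gamma> d" "\<And>s. cdv \<gamma> (\<gamma>' s) s"
  shows "adm_curve N \<gamma>" "\<And>s. cderiv \<gamma> s = \<gamma>' s"
proof -
  show "adm_curve N \<gamma>" unfolding adm_curve_def
  proof (intro conjI allI)
    show "\<And>s. \<gamma> s \<in> ghat N" by fact
    show "\<exists>d. \<forall>s p j k. p < d \<longrightarrow> \<gamma> s p j k = 0" using assms(2) unfolding ulbd_def lbd_def by blast
    fix p j k s
    show "(\<lambda>t. \<gamma> t p j k) field_differentiable at s"
      using assms(3)[of s] unfolding cdv_def field_differentiable_def by blast
  qed
  fix s show "cderiv \<gamma> s = \<gamma>' s"
    using assms(3)[of s] unfolding cdv_def cderiv_def by (auto intro!: ext DERIV_imp_deriv)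
qed

lemma adm_cdv: assumes "adm_curve N \<gamma>" shows "cdv \<gamma> (cderiv \<gamma> s) s" "\<exists>d. ulbd \<gamma> d"
proof -
  show "cdv \<gamma> (cderiv \<gamma> s) s" using assms unfolding adm_curve_def cdv_def cderiv_def
    by (auto intro: field_differentiable_derivI)
  show "\<exists>d. ulbd \<gamma> d" using assms unfolding adm_curve_def ulbd_def lbd_def by blast
qed

lemma chain:
  "smooth_fn N \<phi> \<Longrightarrow> adm_curve N \<gamma> \<Longrightarrow>
    ((\<lambda>t. \<phi> (\<gamma> t)) has_field_derivative pair N (grad N \<phi> (\<gamma> s)) (cderiv \<gamma> s)) (at s)"
  unfolding smooth_fn_def by blast

lemma lbd_of_lb: "lb X \<Longrightarrow> \<exists>d. lbd X d" unfolding lb_def .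

lemma lin_curve:
  assumes X: "X \<in> ghat N" and M: "M \<in> ghat N"
  shows "adm_curve N (\<lambda>t. ladd X (lscale t M))" "cderiv (\<lambda>t. ladd X (lscale t M)) s = M"
proof -
  obtain d where d: "lbd X d" "lbd M d" using X M by (meson ghat_lb lb2E)
  have u: "ulbd (\<lambda>t. ladd X (lscale t M)) d" using d unfolding ulbd_def lbd_def by simp
  have c: "\<And>s. cdv (\<lambda>t. ladd X (lscale t M)) M s"
    unfolding cdv_def by (auto intro!: derivative_eq_intros)
  show "adm_curve N (\<lambda>t. ladd X (lscale t M))" by (rule adm_of_cdv(1)[OF _ u c]) (use X M in simp)
  show "cderiv (\<lambda>t. ladd X (lscale t M)) s = M" by (rule adm_of_cdv(2)[where N=N, OF _ u c]) (use X M in simp)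
qed

lemma has_grad_psi:
  assumes phi: "smooth_fn N \<phi>" and T: "T \<in> ghat N"
  shows "has_grad N (\<lambda>X. \<phi> (lmul N X (calFinv N \<alpha>))) T
           (lmul N (calFinv N \<alpha>) (grad N \<phi> (lmul N T (calFinv N \<alpha>))))"
  unfolding has_grad_def
proof (intro conjI ballI)
  let ?Fi = "calFinv N \<alpha>"
  let ?X = "grad N \<phi> (lmul N T ?Fi)"
  have XG: "?X \<in> ghat N" using phi T by simp
  show "lmul N ?Fi ?X \<in> ghat N" using XG by simp
  fix M assume M: "M \<in> ghat N"
  have MF: "lmul N M ?Fi \<in> ghat N" using M by simp
  have TF: "lmul N T ?Fi \<in> ghat N" using T by simp
  have eq: "\<And>e. lmul N (ladd T (lscale e M)) ?Fi = ladd (lmul N T ?Fi) (lscale e (lmul N M ?Fi))"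
    using T M by (simp add: lmul_ladd_left lmul_lscale_left)
  have "((\<lambda>e. \<phi> (ladd (lmul N T ?Fi) (lscale e (lmul N M ?Fi)))) has_field_derivative
      pair N (grad N \<phi> (ladd (lmul N T ?Fi) (lscale 0 (lmul N M ?Fi))))
       (cderiv (\<lambda>e. ladd (lmul N T ?Fi) (lscale e (lmul N M ?Fi))) 0)) (at 0)"
    by (rule chain[OF phi lin_curve(1)[OF TF MF]])
  moreover have "ladd (lmul N T ?Fi) (lscale 0 (lmul N M ?Fi)) = lmul N T ?Fi" by (simp add: fun_eq_iff)
  moreover have "pair N ?X (lmul N M ?Fi) = pair N (lmul N ?Fi ?X) M"
  proof -
    have "pair N ?X (lmul N M ?Fi) = pair N (lmul N ?X M) ?Fi" using XG M by (simp add: pair_assoc)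
    also have "\<dots> = pair N ?Fi (lmul N ?X M)" using XG M by (simp add: pair_sym)
    also have "\<dots> = pair N (lmul N ?Fi ?X) M" using XG M by (simp add: pair_assoc)
    finally show ?thesis .
  qed
  ultimately show "((\<lambda>e. \<phi> (lmul N (ladd T (lscale e M)) ?Fi)) has_field_derivative pair N (lmul N ?Fi ?X) M) (at 0)"
    unfolding eq lin_curve(2)[OF TF MF] by simp
qed

lemma grad_psi:
  "smooth_fn N \<phi> \<Longrightarrow> T \<in> ghat N \<Longrightarrow> grad N (\<lambda>X. \<phi> (lmul N X (calFinv N \<alpha>))) T
     = lmul N (calFinv N \<alpha>) (grad N \<phi> (lmul N T (calFinv N \<alpha>)))"
  by (rule grad_eq[OF has_grad_psi])

lemma smooth_psi:
  assumes phi: "smooth_fn N \<phi>"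
  shows "smooth_fn N (\<lambda>X. \<phi> (lmul N X (calFinv N \<alpha>)))"
  unfolding smooth_fn_def
proof (intro conjI ballI allI impI)
  let ?Fi = "calFinv N \<alpha>"
  fix T assume "T \<in> ghat N"
  then show "\<exists>G. has_grad N (\<lambda>X. \<phi> (lmul N X ?Fi)) T G" using has_grad_psi[OF phi] by blast
next
  let ?Fi = "calFinv N \<alpha>"
  fix \<gamma> s assume adm: "adm_curve N \<gamma>"
  obtain d where u: "ulbd \<gamma> d" using adm_cdv(2)[OF adm] by blast
  have uF: "ulbd (\<lambda>t. ?Fi) 0" by (rule ulbd_const) (simp add: calFinv_ser lbd_ser)
  have gG: "\<And>t. \<gamma> t \<in> ghat N" using adm unfolding adm_curve_def by blast
  have cd: "\<And>s. cdv (\<lambda>t. lmul N (\<gamma> t) ?Fi) (lmul N (cderiv \<gamma> s) ?Fi) s"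
    using cdv_lmul[OF u uF adm_cdv(1)[OF adm] cdv_const, where N=N] by simp
  have ud: "ulbd (\<lambda>t. lmul N (\<gamma> t) ?Fi) (d + 0)" by (rule ulbd_lmul[OF u uF])
  have adm2: "adm_curve N (\<lambda>t. lmul N (\<gamma> t) ?Fi)" by (rule adm_of_cdv(1)[OF _ ud cd]) (simp add: gG)
  have cd2: "cderiv (\<lambda>t. lmul N (\<gamma> t) ?Fi) s = lmul N (cderiv \<gamma> s) ?Fi" by (rule adm_of_cdv(2)[where N=N, OF _ ud cd]) (simp add: gG)
  have lc: "lb (cderiv \<gamma> s)" using cdv_lbd[OF u adm_cdv(1)[OF adm]] unfolding lb_def by blast
  have XG: "grad N \<phi> (lmul N (\<gamma> s) ?Fi) \<in> ghat N" using phi gG by simp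
  have "pair N (grad N \<phi> (lmul N (\<gamma> s) ?Fi)) (lmul N (cderiv \<gamma> s) ?Fi)
      = pair N (lmul N ?Fi (grad N \<phi> (lmul N (\<gamma> s) ?Fi))) (cderiv \<gamma> s)"
    using XG lc by (simp add: pair_assoc pair_sym[of "lmul N _ _" ?Fi])
  then show "((\<lambda>t. \<phi> (lmul N (\<gamma> t) ?Fi)) has_field_derivative
      pair N (grad N (\<lambda>X. \<phi> (lmul N X ?Fi)) (\<gamma> s)) (cderiv \<gamma> s)) (at s)"
    using chain[OF phi adm2, of s] by (simp add: cd2 grad_psi[OF phi gG])
qed



lemma cdv_ser:
  assumes "\<And>n. ((\<lambda>t. fps_nth (f t) n) has_field_derivative fps_nth f' n) (at s)"
  shows "cdv (\<lambda>t. ser N (f t)) (ser N f') s"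
  unfolding cdv_def
proof (intro allI)
  fix p j k
  show "((\<lambda>t. ser N (f t) p j k) has_field_derivative ser N f' p j k) (at s)"
  proof (cases "p < 0")
    case True then show ?thesis by (simp add: ser_def)
  next
    case False
    have "((\<lambda>t. fps_nth (f t) (nat p) * Ep N (nat p) j k) has_field_derivative fps_nth f' (nat p) * Ep N (nat p) j k) (at s)"
      by (rule DERIV_cmult_right[OF assms])
    then show ?thesis using False by (simp add: ser_def)
  qed
qed

lemma ulbd_ser: "ulbd (\<lambda>t. ser N (f t)) 0" unfolding ulbd_def by (simp add: lbd_ser)

lemma gg_sq_nth: "fps_nth (gg c * gg c) m = of_nat (Suc m) * c ^ m"
proof -
  have "fps_nth (gg c * gg c) m = (\<Sum>i=0..m. c ^ m)"
    unfolding fps_mult_nth by (rule sum.cong) (auto simp: power_add[symmetric])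
  then show ?thesis by simp
qed

lemma d_gg: "((\<lambda>t. fps_nth (gg (t * a)) n) has_field_derivative
     fps_nth (fps_const a * fps_X * gg (s * a) * gg (s * a)) n) (at s)"
proof -
  have "((\<lambda>t. (t * a) ^ n) has_field_derivative of_nat n * (a * (s * a) ^ (n - Suc 0))) (at s)"
  proof -
    have "((\<lambda>t. t * a) has_field_derivative 1 * a) (at s)" by (rule DERIV_cmult_right[OF DERIV_ident])
    from DERIV_power[OF this, where n=n] show ?thesis by simp
  qed
  moreover have "fps_nth (fps_const a * fps_X * gg (s * a) * gg (s * a)) n = of_nat n * (a * (s * a) ^ (n - Suc 0))"
  proof -
    have fe: "fps_const a * fps_X * gg (s * a) * gg (s * a) = fps_X * (fps_const a * (gg (s * a) * gg (s * a)))"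
      by (simp add: ac_simps)
    show ?thesis unfolding fe by (cases n) (simp_all add: fps_X_mult_nth gg_sq_nth)
  qed
  ultimately show ?thesis by simp
qed

lemma d_F: "((\<lambda>t. fps_nth (1 - fps_const (t * a) * fps_X) n) has_field_derivative
     fps_nth (- (fps_const a * fps_X)) n) (at s)"
proof -
  have e: "(\<lambda>t. fps_nth (1 - fps_const (t * a) * fps_X) n) = (\<lambda>t. (if n = 0 then 1 else 0) - (if n = 1 then t * a else 0))"
    by (auto simp: fun_eq_iff)
  show ?thesis unfolding e by (cases "n = 1") (auto intro!: derivative_eq_intros)
qed

lemma ser_neg: "ser N (- f) = lscale (-1) (ser N f)"
  by (auto simp: ser_def fun_eq_iff)

lemma gg0: "gg 0 = 1" by (rule fps_ext) simp

lemma conj_invariant: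
  assumes phi: "ad_inv N \<phi>" and L: "L \<in> ghat N"
  shows "\<phi> (lmul N (calFinv N \<alpha>) (lmul N L (calF N \<alpha>))) = \<phi> L"
proof -
  let ?a = "complex_of_real \<alpha>"
  define G where "G = (\<lambda>t. ser N (gg (t * ?a)))"
  define Fs where "Fs = (\<lambda>t. ser N (1 - fps_const (t * ?a) * fps_X))"
  define \<gamma> where "\<gamma> = (\<lambda>t. lmul N (G t) (lmul N L (Fs t)))"
  define K where "K = (\<lambda>t. ser N (fps_const ?a * fps_X * gg (t * ?a)))"
  define Y where "Y = ser N (fps_const ?a * fps_X)"
  define D where "D = (\<lambda>s. ladd (lmul N (ser N (fps_const ?a * fps_X * gg (s * ?a) * gg (s * ?a))) (lmul N L (Fs s)))
                               (lmul N (G s) (lmul N L (ser N (- (fps_const ?a * fps_X))))))"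
  have sm: "smooth_fn N \<phi>" using phi unfolding ad_inv_def by blast
  obtain d where dL: "lbd L d" using L by (meson ghat_lb lbE)
  have uL: "ulbd (\<lambda>t. L) d" by (rule ulbd_const[OF dL])
  have cG: "\<And>s. cdv G (ser N (fps_const ?a * fps_X * gg (s * ?a) * gg (s * ?a))) s"
    unfolding G_def by (rule cdv_ser[OF d_gg])
  have cF: "\<And>s. cdv Fs (ser N (- (fps_const ?a * fps_X))) s"
    unfolding Fs_def by (rule cdv_ser[OF d_F])
  have uG: "ulbd G 0" and uF: "ulbd Fs 0" unfolding G_def Fs_def by (rule ulbd_ser)+
  have c1: "\<And>s. cdv (\<lambda>t. lmul N L (Fs t)) (lmul N L (ser N (- (fps_const ?a * fps_X)))) s"
    using cdv_lmul[OF uL uF cdv_const cF, where N=N] by simp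
  have u1: "ulbd (\<lambda>t. lmul N L (Fs t)) (d + 0)" by (rule ulbd_lmul[OF uL uF])
  have c\<gamma>: "\<And>s. cdv \<gamma> (D s) s"
    unfolding \<gamma>_def D_def using cdv_lmul[OF uG u1 cG c1] by simp
  have u\<gamma>: "ulbd \<gamma> (0 + (d + 0))" unfolding \<gamma>_def by (rule ulbd_lmul[OF uG u1])
  have g\<gamma>: "\<And>s. \<gamma> s \<in> ghat N" unfolding \<gamma>_def G_def Fs_def using L by simp
  have adm: "adm_curve N \<gamma>" by (rule adm_of_cdv(1)[OF g\<gamma> u\<gamma> c\<gamma>])
  have cd: "\<And>s. cderiv \<gamma> s = D s" by (rule adm_of_cdv(2)[where N=N, OF g\<gamma> u\<gamma> c\<gamma>])
  have Dform: "D s = lsub (lmul N (K s) (\<gamma> s)) (lmul N (\<gamma> s) (K s))" for s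
  proof -
    have lbs: "lb (G s)" "lb (Fs s)" "lb (K s)" "lb Y" "lb L" using L by (auto simp: G_def Fs_def K_def Y_def)
    have e1: "ser N (fps_const ?a * fps_X * gg (s * ?a) * gg (s * ?a)) = lmul N (K s) (G s)"
      by (simp add: K_def G_def ser_mult)
    have e2: "lmul N (Fs s) (K s) = Y"
    proof -
      have "(1 - fps_const (s * ?a) * fps_X) * (fps_const ?a * fps_X * gg (s * ?a))
          = fps_const ?a * fps_X * ((1 - fps_const (s * ?a) * fps_X) * gg (s * ?a))"
        by (rule mult.left_commute)
      also have "\<dots> = fps_const ?a * fps_X" by (simp only: gg_inv mult_1_right)
      finally have fe: "(1 - fps_const (s * ?a) * fps_X) * (fps_const ?a * fps_X * gg (s * ?a)) = fps_const ?a * fps_X" .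
      show ?thesis unfolding Fs_def K_def Y_def ser_mult fe ..
    qed
    have "lmul N (K s) (\<gamma> s) = lmul N (ser N (fps_const ?a * fps_X * gg (s * ?a) * gg (s * ?a))) (lmul N L (Fs s))"
      unfolding \<gamma>_def e1 using lbs by (simp add: lmul_assoc_lb)
    moreover have "lmul N (\<gamma> s) (K s) = lmul N (G s) (lmul N L Y)"
      unfolding \<gamma>_def e2[symmetric] using lbs by (simp add: lmul_assoc_lb)
    moreover have "lmul N (G s) (lmul N L (ser N (- (fps_const ?a * fps_X)))) = lscale (-1) (lmul N (G s) (lmul N L Y))"
      unfolding ser_neg Y_def[symmetric] using lbs by (simp add: lmul_lscale_right)
    ultimately show ?thesis unfolding D_def by (auto simp: fun_eq_iff)
  qed
  have d0: "((\<lambda>t. \<phi> (\<gamma> t)) has_field_derivative 0) (at s)" for s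
  proof -
    have h: "((\<lambda>t. \<phi> (\<gamma> t)) has_field_derivative pair N (grad N \<phi> (\<gamma> s)) (D s)) (at s)"
      using chain[OF sm adm, of s] by (simp add: cd)
    let ?g = "grad N \<phi> (\<gamma> s)"
    have gg': "?g \<in> ghat N" using sm g\<gamma> by simp
    have lbs: "lb ?g" "lb (\<gamma> s)" "lb (K s)" using gg' g\<gamma>[of s] by (auto simp: K_def)
    have comm: "lmul N ?g (\<gamma> s) = lmul N (\<gamma> s) ?g" using phi g\<gamma> unfolding ad_inv_def by blast
    have "pair N ?g (D s) = pair N ?g (lmul N (K s) (\<gamma> s)) - pair N ?g (lmul N (\<gamma> s) (K s))"
      unfolding Dform using lbs by (simp add: pair_lsub_right)
    also have "pair N ?g (lmul N (K s) (\<gamma> s)) = pair N (lmul N (\<gamma> s) ?g) (K s)"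
    proof -
      have "pair N ?g (lmul N (K s) (\<gamma> s)) = pair N (lmul N ?g (K s)) (\<gamma> s)" using lbs by (simp add: pair_assoc)
      also have "\<dots> = pair N (\<gamma> s) (lmul N ?g (K s))" using lbs by (simp add: pair_sym)
      also have "\<dots> = pair N (lmul N (\<gamma> s) ?g) (K s)" using lbs by (simp add: pair_assoc)
      finally show ?thesis .
    qed
    also have "pair N ?g (lmul N (\<gamma> s) (K s)) = pair N (lmul N ?g (\<gamma> s)) (K s)" using lbs by (simp add: pair_assoc)
    finally have "pair N ?g (D s) = 0" using comm by simp
    then show ?thesis using h by simp
  qed
  obtain c where c: "\<forall>x\<in>UNIV. \<phi> (\<gamma> x) = c"
    using has_field_derivative_zero_constant[of UNIV "\<lambda>t. \<phi> (\<gamma> t)"] d0 by auto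
  then have "\<phi> (\<gamma> 1) = \<phi> (\<gamma> 0)" by simp
  moreover have "\<gamma> 1 = lmul N (calFinv N \<alpha>) (lmul N L (calF N \<alpha>))"
    by (simp add: \<gamma>_def G_def Fs_def calFinv_ser calF_ser)
  moreover have "\<gamma> 0 = L"
    using L by (simp add: \<gamma>_def G_def Fs_def gg0 ser_one lmul_lid_left lmul_lid_right ghat_okN okN_lmul)
  ultimately show ?thesis by simp
qed



lemma ghat_okN'[simp]: "X \<in> ghat N \<Longrightarrow> okN N X" by (rule ghat_okN)

lemma FiFZ: "Z \<in> ghat N \<Longrightarrow> lmul N (calFinv N \<alpha>) (lmul N (calF N \<alpha>) Z) = Z"
  by (simp add: lmul_assoc_lb[symmetric] Fi_F lmul_lid_left)
lemma FFiZ: "Z \<in> ghat N \<Longrightarrow> lmul N (calF N \<alpha>) (lmul N (calFinv N \<alpha>) Z) = Z"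
  by (simp add: lmul_assoc_lb[symmetric] F_Fi lmul_lid_left)
lemma ZFiF: "Z \<in> ghat N \<Longrightarrow> lmul N (lmul N Z (calFinv N \<alpha>)) (calF N \<alpha>) = Z"
  by (simp add: lmul_assoc_lb Fi_F lmul_lid_right)
lemma ZFFi: "Z \<in> ghat N \<Longrightarrow> lmul N (lmul N Z (calF N \<alpha>)) (calFinv N \<alpha>) = Z"
  by (simp add: lmul_assoc_lb F_Fi lmul_lid_right)

lemma grad_conj:
  assumes phi: "ad_inv N \<phi>" and L: "L \<in> ghat N"
  shows "grad N \<phi> (lmul N (calFinv N \<alpha>) (lmul N L (calF N \<alpha>)))
       = lmul N (calFinv N \<alpha>) (lmul N (grad N \<phi> L) (calF N \<alpha>))"
proof (rule grad_eq)
  let ?F = "calF N \<alpha>" and ?Fi = "calFinv N \<alpha>"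
  let ?X = "grad N \<phi> L"
  have sm: "smooth_fn N \<phi>" using phi unfolding ad_inv_def by blast
  have hg: "has_grad N \<phi> L ?X" by (rule smooth_has_grad[OF sm L])
  have XG: "?X \<in> ghat N" using sm L by simp
  show "has_grad N \<phi> (lmul N ?Fi (lmul N L ?F)) (lmul N ?Fi (lmul N ?X ?F))"
    unfolding has_grad_def
  proof (intro conjI ballI)
    show "lmul N ?Fi (lmul N ?X ?F) \<in> ghat N" using XG by simp
    fix M assume M: "M \<in> ghat N"
    let ?M' = "lmul N ?F (lmul N M ?Fi)"
    have M'G: "?M' \<in> ghat N" using M by simp
    have e: "ladd (lmul N ?Fi (lmul N L ?F)) (lscale e M) = lmul N ?Fi (lmul N (ladd L (lscale e ?M')) ?F)" for e
    proof -
      have "lmul N ?Fi (lmul N (lscale e ?M') ?F) = lscale e M"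
        using M by (simp add: lmul_lscale_left lmul_lscale_right lmul_assoc_lb FiFZ Fi_F lmul_lid_right)
      then show ?thesis using L M by (simp add: lmul_ladd_left lmul_ladd_right)
    qed
    have inv: "\<phi> (lmul N ?Fi (lmul N (ladd L (lscale e ?M')) ?F)) = \<phi> (ladd L (lscale e ?M'))" for e
      by (rule conj_invariant[OF phi]) (use L M'G in simp)
    have d: "((\<lambda>e. \<phi> (ladd L (lscale e ?M'))) has_field_derivative pair N ?X ?M') (at 0)"
      using hg M'G unfolding has_grad_def by blast
    have p: "pair N ?X ?M' = pair N (lmul N ?Fi (lmul N ?X ?F)) M"
    proof -
      have l: "lb ?X" "lb M" "lb ?F" "lb ?Fi" using XG M by auto
      have "pair N ?X ?M' = pair N (lmul N ?X ?F) (lmul N M ?Fi)" using l by (simp add: pair_assoc)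
      also have "\<dots> = pair N (lmul N (lmul N ?X ?F) M) ?Fi" using l by (simp add: pair_assoc)
      also have "\<dots> = pair N ?Fi (lmul N (lmul N ?X ?F) M)" using l by (simp add: pair_sym)
      also have "\<dots> = pair N (lmul N ?Fi (lmul N ?X ?F)) M" using l by (simp add: pair_assoc lmul_assoc_lb)
      finally show ?thesis .
    qed
    show "((\<lambda>e. \<phi> (ladd (lmul N ?Fi (lmul N L ?F)) (lscale e M))) has_field_derivative
        pair N (lmul N ?Fi (lmul N ?X ?F)) M) (at 0)"
      using d unfolding e inv p .
  qed
qed

lemma grad_FiT:
  assumes phi: "ad_inv N \<phi>" and T: "T \<in> ghat N"
  shows "lmul N (grad N \<phi> (lmul N (calFinv N \<alpha>) T)) (calFinv N \<alpha>)
       = lmul N (calFinv N \<alpha>) (grad N \<phi> (lmul N T (calFinv N \<alpha>)))"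
proof -
  let ?F = "calF N \<alpha>" and ?Fi = "calFinv N \<alpha>"
  have sm: "smooth_fn N \<phi>" using phi unfolding ad_inv_def by blast
  have TF: "lmul N T ?Fi \<in> ghat N" using T by simp
  have XG: "grad N \<phi> (lmul N T ?Fi) \<in> ghat N" using sm TF by simp
  have "lmul N ?Fi T = lmul N ?Fi (lmul N (lmul N T ?Fi) ?F)" using T by (simp add: ZFiF)
  then have "grad N \<phi> (lmul N ?Fi T) = lmul N ?Fi (lmul N (grad N \<phi> (lmul N T ?Fi)) ?F)"
    using grad_conj[OF phi TF] by simp
  then show ?thesis using XG by (simp add: lmul_assoc_lb F_Fi lmul_lid_right)
qed

lemma phi_swap:
  assumes phi: "ad_inv N \<phi>" and T: "T \<in> ghat N"
  shows "\<phi> (lmul N T (calFinv N \<alpha>)) = \<phi> (lmul N (calFinv N \<alpha>) T)"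
proof -
  have TF: "lmul N T (calFinv N \<alpha>) \<in> ghat N" using T by simp
  have "lmul N (calFinv N \<alpha>) T = lmul N (calFinv N \<alpha>) (lmul N (lmul N T (calFinv N \<alpha>)) (calF N \<alpha>))"
    using T by (simp add: ZFiF)
  then show ?thesis using conj_invariant[OF phi TF] by simp
qed

lemma W_zero:
  fixes \<alpha> :: real
  assumes phi: "ad_inv N \<phi>" and T: "T \<in> ghat N"
  defines "X \<equiv> grad N \<phi> (lmul N T (calFinv N \<alpha>))"
  shows "lmul N T (lmul N (lmul N (calFinv N \<alpha>) X) (calF N \<alpha>)) = lmul N (lmul N (calF N \<alpha>) (lmul N (calFinv N \<alpha>) X)) T"
proof -
  let ?F = "calF N \<alpha>" and ?Fi = "calFinv N \<alpha>"
  have sm: "smooth_fn N \<phi>" using phi unfolding ad_inv_def by blast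
  have TF: "lmul N T ?Fi \<in> ghat N" using T by simp
  have XG: "X \<in> ghat N" using sm TF by (simp add: X_def)
  have comm: "lmul N X (lmul N T ?Fi) = lmul N (lmul N T ?Fi) X"
    using phi TF unfolding ad_inv_def X_def by blast
  have "lmul N T (lmul N (lmul N ?Fi X) ?F) = lmul N (lmul N (lmul N T ?Fi) X) ?F"
    using T XG by (simp add: lmul_assoc_lb)
  also have "\<dots> = lmul N (lmul N X (lmul N T ?Fi)) ?F" using comm by simp
  also have "\<dots> = lmul N X T" using T XG by (simp add: lmul_assoc_lb Fi_F lmul_lid_right)
  also have "\<dots> = lmul N (lmul N ?F (lmul N ?Fi X)) T" using XG by (simp add: FFiZ)
  finally show ?thesis .
qed

lemma Vg_psi:
  fixes \<alpha> :: real
  assumes phi: "ad_inv N \<phi>" and T: "T \<in> ghat N"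
  defines "A \<equiv> lmul N (calFinv N \<alpha>) (grad N \<phi> (lmul N T (calFinv N \<alpha>)))"
  shows "Vg N \<alpha> T A = lscale (1/2) (lsub (lmul N T (lmul N (Rop A) (calF N \<alpha>))) (lmul N (lmul N (calF N \<alpha>) (Rop A)) T))"
proof -
  have "lmul N T (lmul N A (calF N \<alpha>)) = lmul N (lmul N (calF N \<alpha>) A) T"
    unfolding A_def by (rule W_zero[OF phi T])
  then show ?thesis unfolding Vg_def by (simp add: fun_eq_iff Rstar_def)
qed



lemma V_eq:
  fixes \<alpha> :: real
  assumes phi: "ad_inv N \<phi>" and T: "T \<in> ghat N"
  defines "A \<equiv> lmul N (calFinv N \<alpha>) (grad N \<phi> (lmul N T (calFinv N \<alpha>)))"
  shows "lsub (lmul N T (lscale (1/2) (lmul N (Rop (lmul N (grad N \<phi> (lmul N (calFinv N \<alpha>) T)) (calFinv N \<alpha>))) (calF N \<alpha>))))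
              (lmul N (lscale (1/2) (lmul N (calF N \<alpha>) (Rop (lmul N (calFinv N \<alpha>) (grad N \<phi> (lmul N T (calFinv N \<alpha>))))))) T)
         = Vg N \<alpha> T A"
proof -
  have sm: "smooth_fn N \<phi>" using phi unfolding ad_inv_def by blast
  have AG: "A \<in> ghat N" using sm T by (simp add: A_def)
  have g: "lmul N (grad N \<phi> (lmul N (calFinv N \<alpha>) T)) (calFinv N \<alpha>) = A"
    unfolding A_def by (rule grad_FiT[OF phi T])
  show ?thesis
    unfolding Vg_psi[OF phi T, of \<alpha>, folded A_def] g A_def[symmetric]
    using T AG by (simp add: lmul_lscale_left lmul_lscale_right fun_eq_iff algebra_simps)
qed

lemma partB:
  assumes phi: "ad_inv N \<phi>"
  shows "(let F = calF N \<alpha>; Fi = calFinv N \<alpha>; \<psi> = (\<lambda>T. \<phi> (lmul N T Fi));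
             C1 = (\<lambda>T. lscale (1/2) (lmul N F (Rop (lmul N Fi (grad N \<phi> (lmul N T Fi))))));
             C2 = (\<lambda>T. lscale (1/2) (lmul N (Rop (lmul N (grad N \<phi> (lmul N Fi T)) Fi)) F));
             V = (\<lambda>T. lsub (lmul N T (C2 T)) (lmul N (C1 T) T));
             T1 = (\<lambda>T. ladd (lid N) (lscale (complex_of_real \<alpha>) (lmul N T Fi)));
             T2 = (\<lambda>T. ladd (lid N) (lscale (complex_of_real \<alpha>) (lmul N Fi T)))
         in (\<forall>T\<in>ghat N. \<phi> (lmul N T Fi) = \<phi> (lmul N Fi T))
          \<and> smooth_fn N \<psi>
          \<and> (\<forall>T\<in>ghat N. ham_vf N \<alpha> \<psi> T (V T))
          \<and> (\<forall>T\<in>Tset N m. V T \<in> Tdir N m)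
          \<and> (\<forall>T\<in>ghat N.
               lscale (complex_of_real \<alpha>) (lmul N (V T) Fi)
                 = lsub (lmul N (T1 T) (C1 T)) (lmul N (C1 T) (T1 T))
             \<and> lscale (complex_of_real \<alpha>) (lmul N Fi (V T))
                 = lsub (lmul N (T2 T) (C2 T)) (lmul N (C2 T) (T2 T))))"
proof -
  let ?F = "calF N \<alpha>" and ?Fi = "calFinv N \<alpha>" and ?a = "complex_of_real \<alpha>"
  let ?A = "\<lambda>T. lmul N ?Fi (grad N \<phi> (lmul N T ?Fi))"
  let ?C1 = "\<lambda>T. lscale (1/2) (lmul N ?F (Rop (lmul N ?Fi (grad N \<phi> (lmul N T ?Fi)))))"
  let ?C2 = "\<lambda>T. lscale (1/2) (lmul N (Rop (lmul N (grad N \<phi> (lmul N ?Fi T)) ?Fi)) ?F)"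
  let ?V = "\<lambda>T. lsub (lmul N T (?C2 T)) (lmul N (?C1 T) T)"
  let ?\<psi> = "\<lambda>T. \<phi> (lmul N T ?Fi)"
  have sm: "smooth_fn N \<phi>" using phi unfolding ad_inv_def by blast
  have smp: "smooth_fn N ?\<psi>" by (rule smooth_psi[OF sm])
  have AG: "\<And>T. T \<in> ghat N \<Longrightarrow> ?A T \<in> ghat N" using sm by simp
  have C2eq: "\<And>T. T \<in> ghat N \<Longrightarrow> ?C2 T = lscale (1/2) (lmul N (Rop (?A T)) ?F)"
    using grad_FiT[OF phi] by simp
  have Veq: "\<And>T. T \<in> ghat N \<Longrightarrow> ?V T = Vg N \<alpha> T (grad N ?\<psi> T)"
    using V_eq[OF phi] grad_psi[OF sm] by simp
  have hv: "\<forall>T\<in>ghat N. ham_vf N \<alpha> ?\<psi> T (?V T)"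
    using Veq ham_vf_Vg[OF smp] by simp
  have td: "\<forall>T\<in>Tset N m. ?V T \<in> Tdir N m"
  proof
    fix T assume T: "T \<in> Tset N m"
    then have TG: "T \<in> ghat N" by simp
    show "?V T \<in> Tdir N m" unfolding Veq[OF TG] by (rule Vg_Tdir[OF T]) (use smp TG in simp)
  qed
  have ids: "\<forall>T\<in>ghat N.
               lscale ?a (lmul N (?V T) ?Fi)
                 = lsub (lmul N (ladd (lid N) (lscale ?a (lmul N T ?Fi))) (?C1 T)) (lmul N (?C1 T) (ladd (lid N) (lscale ?a (lmul N T ?Fi))))
             \<and> lscale ?a (lmul N ?Fi (?V T))
                 = lsub (lmul N (ladd (lid N) (lscale ?a (lmul N ?Fi T))) (?C2 T)) (lmul N (?C2 T) (ladd (lid N) (lscale ?a (lmul N ?Fi T))))"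
  proof
    fix T assume T: "T \<in> ghat N"
    define A where "A = ?A T"
    have AGT: "A \<in> ghat N" using AG[OF T] by (simp add: A_def)
    define C1 where "C1 = lscale (1/2) (lmul N ?F (Rop A))"
    define C2 where "C2 = lscale (1/2) (lmul N (Rop A) ?F)"
    have c1: "?C1 T = C1" by (simp add: C1_def A_def)
    have c2: "?C2 T = C2" using C2eq[OF T] by (simp add: C2_def A_def)
    have CG: "C1 \<in> ghat N" "C2 \<in> ghat N" using AGT by (simp_all add: C1_def C2_def)
    have k1: "lmul N (lmul N T C2) ?Fi = lmul N (lmul N T ?Fi) C1"
      using T AGT by (simp add: C1_def C2_def lmul_assoc_lb lmul_lscale_left lmul_lscale_right F_Fi lmul_lid_right FiFZ FFiZ)
    have k2: "lmul N ?Fi (lmul N C1 T) = lmul N C2 (lmul N ?Fi T)"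
      using T AGT by (simp add: C1_def C2_def lmul_assoc_lb lmul_lscale_left lmul_lscale_right F_Fi lmul_lid_right FiFZ FFiZ)
    have e1: "lscale ?a (lmul N (lsub (lmul N T C2) (lmul N C1 T)) ?Fi)
           = lsub (lmul N (ladd (lid N) (lscale ?a (lmul N T ?Fi))) C1) (lmul N C1 (ladd (lid N) (lscale ?a (lmul N T ?Fi))))"
    proof -
      have h1: "lmul N (lsub (lmul N T C2) (lmul N C1 T)) ?Fi = lsub (lmul N (lmul N T ?Fi) C1) (lmul N C1 (lmul N T ?Fi))"
        using T CG by (simp add: lmul_lsub_left k1 lmul_assoc_lb)
      have h2: "lmul N (ladd (lid N) (lscale ?a (lmul N T ?Fi))) C1 = ladd C1 (lscale ?a (lmul N (lmul N T ?Fi) C1))"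
        using T CG by (simp add: lmul_ladd_left lmul_lscale_left lmul_lid_left)
      have h3: "lmul N C1 (ladd (lid N) (lscale ?a (lmul N T ?Fi))) = ladd C1 (lscale ?a (lmul N C1 (lmul N T ?Fi)))"
        using T CG by (simp add: lmul_ladd_right lmul_lscale_right lmul_lid_right)
      show ?thesis unfolding h1 h2 h3 by (simp add: fun_eq_iff algebra_simps)
    qed
    have e2: "lscale ?a (lmul N ?Fi (lsub (lmul N T C2) (lmul N C1 T)))
           = lsub (lmul N (ladd (lid N) (lscale ?a (lmul N ?Fi T))) C2) (lmul N C2 (ladd (lid N) (lscale ?a (lmul N ?Fi T))))"
    proof -
      have h1: "lmul N ?Fi (lsub (lmul N T C2) (lmul N C1 T)) = lsub (lmul N (lmul N ?Fi T) C2) (lmul N C2 (lmul N ?Fi T))"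
        using T CG by (simp add: lmul_lsub_right k2 lmul_assoc_lb)
      have h2: "lmul N (ladd (lid N) (lscale ?a (lmul N ?Fi T))) C2 = ladd C2 (lscale ?a (lmul N (lmul N ?Fi T) C2))"
        using T CG by (simp add: lmul_ladd_left lmul_lscale_left lmul_lid_left)
      have h3: "lmul N C2 (ladd (lid N) (lscale ?a (lmul N ?Fi T))) = ladd C2 (lscale ?a (lmul N C2 (lmul N ?Fi T)))"
        using T CG by (simp add: lmul_ladd_right lmul_lscale_right lmul_lid_right)
      show ?thesis unfolding h1 h2 h3 by (simp add: fun_eq_iff algebra_simps)
    qed
    show "lscale ?a (lmul N (?V T) ?Fi)
                 = lsub (lmul N (ladd (lid N) (lscale ?a (lmul N T ?Fi))) (?C1 T)) (lmul N (?C1 T) (ladd (lid N) (lscale ?a (lmul N T ?Fi))))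
             \<and> lscale ?a (lmul N ?Fi (?V T))
                 = lsub (lmul N (ladd (lid N) (lscale ?a (lmul N ?Fi T))) (?C2 T)) (lmul N (?C2 T) (ladd (lid N) (lscale ?a (lmul N ?Fi T))))"
      unfolding c1 c2 using e1 e2 by simp
  qed
  have sw: "\<forall>T\<in>ghat N. \<phi> (lmul N T ?Fi) = \<phi> (lmul N ?Fi T)" using phi_swap[OF phi] by blast
  show ?thesis unfolding Let_def using sw smp hv td ids by blast
qed

lemma partC:
  assumes p1: "ad_inv N \<phi>1" and p2: "ad_inv N \<phi>2" and T: "T \<in> ghat N"
  shows "PB1 N \<alpha> (\<lambda>X. \<phi>1 (lmul N X (calFinv N \<alpha>))) (\<lambda>X. \<phi>2 (lmul N X (calFinv N \<alpha>))) T = 0"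
proof -
  let ?F = "calF N \<alpha>" and ?Fi = "calFinv N \<alpha>"
  have sm1: "smooth_fn N \<phi>1" using p1 unfolding ad_inv_def by blast
  have sm2: "smooth_fn N \<phi>2" using p2 unfolding ad_inv_def by blast
  let ?\<psi>1 = "\<lambda>X. \<phi>1 (lmul N X ?Fi)" and ?\<psi>2 = "\<lambda>X. \<phi>2 (lmul N X ?Fi)"
  define X2 where "X2 = grad N \<phi>2 (lmul N T ?Fi)"
  define A where "A = lmul N ?Fi (grad N \<phi>1 (lmul N T ?Fi))"
  define B where "B = lmul N ?Fi X2"
  have X2G: "X2 \<in> ghat N" using sm2 T by (simp add: X2_def)
  have AG: "A \<in> ghat N" using sm1 T by (simp add: A_def)
  have BG: "B \<in> ghat N" using X2G by (simp add: B_def)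
  have l: "lb T" "lb A" "lb B" "lb X2" "lb ?F" "lb ?Fi" "lb (Rop A)" using T AG BG X2G by auto
  have vg: "Vg N \<alpha> T A = lscale (1/2) (lsub (lmul N T (lmul N (Rop A) ?F)) (lmul N (lmul N ?F (Rop A)) T))"
    unfolding A_def by (rule Vg_psi[OF p1 T])
  have hv: "ham_vf N \<alpha> ?\<psi>1 T (Vg N \<alpha> T (grad N ?\<psi>1 T))" by (rule ham_vf_Vg[OF smooth_psi[OF sm1] T])
  then have "PB1 N \<alpha> ?\<psi>1 ?\<psi>2 T = pair N (grad N ?\<psi>2 T) (Vg N \<alpha> T (grad N ?\<psi>1 T))"
    using smooth_psi[OF sm2] unfolding ham_vf_def by blast
  also have "\<dots> = pair N B (lscale (1/2) (lsub (lmul N T (lmul N (Rop A) ?F)) (lmul N (lmul N ?F (Rop A)) T)))"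
    by (simp only: grad_psi[OF sm1 T] grad_psi[OF sm2 T] A_def[symmetric] X2_def[symmetric] B_def[symmetric] vg)
  also have "\<dots> = (1/2) * (pair N B (lmul N T (lmul N (Rop A) ?F)) - pair N B (lmul N (lmul N ?F (Rop A)) T))"
    using l by (simp add: pair_lscale_right pair_lsub_right)
  also have "pair N B (lmul N T (lmul N (Rop A) ?F)) = pair N (lmul N X2 T) (Rop A)"
  proof -
    have "pair N B (lmul N T (lmul N (Rop A) ?F)) = pair N (lmul N (lmul N B T) (Rop A)) ?F"
      using l by (simp add: pair_assoc)
    also have "\<dots> = pair N ?F (lmul N (lmul N B T) (Rop A))" using l by (simp add: pair_sym)
    also have "\<dots> = pair N (lmul N (lmul N ?F B) T) (Rop A)" using l by (simp add: pair_assoc lmul_assoc_lb)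
    also have "lmul N ?F B = X2" unfolding B_def using X2G by (simp add: FFiZ)
    finally show ?thesis .
  qed
  also have "pair N B (lmul N (lmul N ?F (Rop A)) T) = pair N (lmul N X2 T) (Rop A)"
  proof -
    have "pair N B (lmul N (lmul N ?F (Rop A)) T) = pair N (lmul N B ?F) (lmul N (Rop A) T)"
      using l by (simp add: pair_assoc lmul_assoc_lb)
    also have "\<dots> = pair N (lmul N (Rop A) T) (lmul N B ?F)" using l by (simp add: pair_sym)
    also have "\<dots> = pair N (Rop A) (lmul N T (lmul N B ?F))" using l by (simp add: pair_assoc)
    also have "lmul N T (lmul N B ?F) = lmul N (lmul N ?F B) T"
      unfolding B_def X2_def by (rule W_zero[OF p2 T])
    also have "lmul N ?F B = X2" unfolding B_def using X2G by (simp add: FFiZ)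
    also have "pair N (Rop A) (lmul N X2 T) = pair N (lmul N X2 T) (Rop A)" using l by (simp add: pair_sym)
    finally show ?thesis .
  qed
  finally show ?thesis by (simp only: diff_self mult_zero_right)
qed

theorem mainTheorem6:
  fixes N m :: nat and \<alpha> :: real
  assumes "N \<ge> 2" and "m \<ge> 1"
  shows
   \<comment> \<open>(a)\<close>
   "poisson_submanifold N \<alpha> (Tset N m) (Tdir N m)
   \<comment> \<open>(b)\<close>
    \<and> (\<forall>\<phi>. ad_inv N \<phi> \<longrightarrow>
        (let F = calF N \<alpha>; Fi = calFinv N \<alpha>; \<psi> = (\<lambda>T. \<phi> (lmul N T Fi));
             C1 = (\<lambda>T. lscale (1/2) (lmul N F (Rop (lmul N Fi (grad N \<phi> (lmul N T Fi))))));
             C2 = (\<lambda>T. lscale (1/2) (lmul N (Rop (lmul N (grad N \<phi> (lmul N Fi T)) Fi)) F));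
             V = (\<lambda>T. lsub (lmul N T (C2 T)) (lmul N (C1 T) T));
             T1 = (\<lambda>T. ladd (lid N) (lscale (complex_of_real \<alpha>) (lmul N T Fi)));
             T2 = (\<lambda>T. ladd (lid N) (lscale (complex_of_real \<alpha>) (lmul N Fi T)))
         in (\<forall>T\<in>ghat N. \<phi> (lmul N T Fi) = \<phi> (lmul N Fi T))
          \<and> smooth_fn N \<psi>
          \<and> (\<forall>T\<in>ghat N. ham_vf N \<alpha> \<psi> T (V T))
          \<and> (\<forall>T\<in>Tset N m. V T \<in> Tdir N m)
          \<and> (\<forall>T\<in>ghat N.
               lscale (complex_of_real \<alpha>) (lmul N (V T) Fi)
                 = lsub (lmul N (T1 T) (C1 T)) (lmul N (C1 T) (T1 T))
             \<and> lscale (complex_of_real \<alpha>) (lmul N Fi (V T))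
                 = lsub (lmul N (T2 T) (C2 T)) (lmul N (C2 T) (T2 T)))))
   \<comment> \<open>(c)\<close>
    \<and> (\<forall>\<phi>1 \<phi>2. ad_inv N \<phi>1 \<and> ad_inv N \<phi>2 \<longrightarrow>
        (\<forall>T\<in>ghat N. PB1 N \<alpha> (\<lambda>X. \<phi>1 (lmul N X (calFinv N \<alpha>)))
                              (\<lambda>X. \<phi>2 (lmul N X (calFinv N \<alpha>))) T = 0))"
proof -
  have a: "poisson_submanifold N \<alpha> (Tset N m) (Tdir N m)"
    unfolding poisson_submanifold_def
  proof (intro allI impI ballI)
    fix H L assume H: "smooth_fn N H" and L: "L \<in> Tset N m"
    have LG: "L \<in> ghat N" using L by simp
    show "\<exists>V\<in>Tdir N m. ham_vf N \<alpha> H L V"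
      using ham_vf_Vg[OF H LG] Vg_Tdir[OF L smooth_grad_ghat[OF H LG]] by blast
  qed
  show ?thesis using a partB partC by blast
qed

end
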